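(* Let $S=\{(x_i,y_i)\}_{i=1}^n$ with $0\le x_1<x_2<\dots<x_n$, and let $\hat f_S$ be the minimum-norm interpolating two-layer ReLU network for $S$ (defined in the context). Then: (i) $\hat f_S(x)=g_1(x)$ for $x\in(-\infty,x_2)$; (ii) $\hat f_S(x)=g_{n-1}(x)$ for $x\in[x_{n-1},\infty)$; (iii) for each $i\in\{2,\dots,n-2\}$ and $x\in[x_i,x_{i+1})$: if $\mathsf{curv}(x_i)=\mathsf{curv}(x_{i+1})=+1$ then $\max\{g_{i-1}(x),g_{i+1}(x)\}\le\hat f_S(x)\le g_i(x)$; if $\mathsf{curv}(x_i)=\mathsf{curv}(x_{i+1})=-1$ then $\min\{g_{i-1}(x),g_{i+1}(x)\}\ge\hat f_S(x)\ge g_i(x)$; otherwise (i.e. $\mathsf{curv}(x_i)=0$, or $\mathsf{curv}(x_{i+1})=0$, or $\mathsf{curv}(x_i)\ne\mathsf{curv}(x_{i+1})$) $\hat f_S(x)=g_i(x)$.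
   Context: A two-layer ReLU network with skip connection is $f_{\theta,a_0,b_0}(x)=\sum_{j=1}^m a_j(w_jx+b_j)_++a_0x+b_0$ with $\theta=\{a_j,w_j,b_j\}_{j=1}^m\in\mathbb{R}^{3m}$ and arbitrary width $m$. The min-norm interpolator $\hat f_S$ is the (unique) minimizer of $\|\theta\|_2^2$ over all $m,\theta,a_0,b_0$ subject to $f_{\theta,a_0,b_0}(x_i)=y_i$ for all $i\in[n]$ (the weights $a_0,b_0$ are not penalized). For $i\in[n-1]$, $g_i$ is the affine function through $(x_i,y_i)$ and $(x_{i+1},y_{i+1})$, and $\delta_i$ is its slope; set $\delta_0:=\delta_1$, $\delta_n:=\delta_{n-1}$. For $i\in[n]$, $\mathsf{curv}(x_i)=+1$ if $\delta_i>\delta_{i-1}$, $0$ if $\delta_i=\delta_{i-1}$, and $-1$ if $\delta_i<\delta_{i-1}$. *)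

theory Defs
  imports Complex_Main
begin

definition relu :: "real \<Rightarrow> real" where
  "relu z = max 0 z"

definition nn :: "nat \<Rightarrow> (nat \<Rightarrow> real) \<Rightarrow> (nat \<Rightarrow> real) \<Rightarrow> (nat \<Rightarrow> real) \<Rightarrow> real \<Rightarrow> real \<Rightarrow> real \<Rightarrow> real" where
  "nn m a w b a0 b0 t = (\<Sum>j<m. a j * relu (w j * t + b j)) + a0 * t + b0"

definition param_norm :: "nat \<Rightarrow> (nat \<Rightarrow> real) \<Rightarrow> (nat \<Rightarrow> real) \<Rightarrow> (nat \<Rightarrow> real) \<Rightarrow> real" where
  "param_norm m a w b = (\<Sum>j<m. (a j)\<^sup>2 + (w j)\<^sup>2 + (b j)\<^sup>2)"

definition interpolates :: "nat \<Rightarrow> (nat \<Rightarrow> real) \<Rightarrow> (nat \<Rightarrow> real) \<Rightarrow> nat \<Rightarrow> (nat \<Rightarrow> real) \<Rightarrow> (nat \<Rightarrow> real) \<Rightarrow> (nat \<Rightarrow> real) \<Rightarrow> real \<Rightarrow> real \<Rightarrow> bool" where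
  "interpolates n x y m a w b a0 b0 \<longleftrightarrow> (\<forall>i\<in>{1..n}. nn m a w b a0 b0 (x i) = y i)"

definition min_norm_interpolant :: "nat \<Rightarrow> (nat \<Rightarrow> real) \<Rightarrow> (nat \<Rightarrow> real) \<Rightarrow> (real \<Rightarrow> real) \<Rightarrow> bool" where
  "min_norm_interpolant n x y f \<longleftrightarrow>
     (\<exists>m a w b a0 b0. interpolates n x y m a w b a0 b0 \<and> f = nn m a w b a0 b0 \<and>
        (\<forall>m' a' w' b' a0' b0'. interpolates n x y m' a' w' b' a0' b0' \<longrightarrow>
              param_norm m a w b \<le> param_norm m' a' w' b'))"

definition slope :: "(nat \<Rightarrow> real) \<Rightarrow> (nat \<Rightarrow> real) \<Rightarrow> nat \<Rightarrow> real" where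
  "slope x y i = (y (i+1) - y i) / (x (i+1) - x i)"

definition gline :: "(nat \<Rightarrow> real) \<Rightarrow> (nat \<Rightarrow> real) \<Rightarrow> nat \<Rightarrow> real \<Rightarrow> real" where
  "gline x y i t = y i + slope x y i * (t - x i)"

definition delta :: "nat \<Rightarrow> (nat \<Rightarrow> real) \<Rightarrow> (nat \<Rightarrow> real) \<Rightarrow> nat \<Rightarrow> real" where
  "delta n x y i = (if i = 0 then slope x y 1 else if i = n then slope x y (n-1) else slope x y i)"

definition curv :: "nat \<Rightarrow> (nat \<Rightarrow> real) \<Rightarrow> (nat \<Rightarrow> real) \<Rightarrow> nat \<Rightarrow> int" where
  "curv n x y i = (if delta n x y i > delta n x y (i-1) then 1
                   else if delta n x y i = delta n x y (i-1) then 0 else -1)"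

end

theory Submission
  imports Defs
begin

definition W :: "real \<Rightarrow> real" where "W z = sqrt (1 + z^2)"

lemma W_pos: "0 < W z"
  unfolding W_def by (simp add: add_pos_nonneg)

lemma W_sq: "(W z)^2 = 1 + z^2"
  unfolding W_def by (simp add: add_nonneg_nonneg)

lemma W_mono: assumes "0 \<le> u" "u \<le> z" shows "W u \<le> W z"
  unfolding W_def using assms by (simp add: power_mono)

lemma W_tan: "\<bar>1 + z*q\<bar> \<le> W z * W q"
proof -
  have "(1 + z*q)^2 \<le> (1 + z^2) * (1 + q^2)"
  proof -
    have "(1 + z^2) * (1 + q^2) - (1 + z*q)^2 = (z - q)^2" by (simp add: power2_eq_square algebra_simps)
    moreover have "0 \<le> (z - q)^2" by simp
    ultimately show ?thesis by linarith
  qed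
  hence "sqrt ((1 + z*q)^2) \<le> sqrt ((1 + z^2) * (1 + q^2))" by (rule real_sqrt_le_mono)
  thus ?thesis unfolding W_def by (simp add: real_sqrt_mult)
qed

lemma W_tan_strict: assumes "z \<noteq> q" shows "\<bar>1 + z*q\<bar> < W z * W q"
proof -
  have "0 < (z - q)^2" using assms by simp
  moreover have "(1 + z^2) * (1 + q^2) - (1 + z*q)^2 = (z - q)^2" by (simp add: power2_eq_square algebra_simps)
  ultimately have "(1 + z*q)^2 < (1 + z^2) * (1 + q^2)" by linarith
  hence "sqrt ((1 + z*q)^2) < sqrt ((1 + z^2) * (1 + q^2))" by (rule real_sqrt_less_mono)
  thus ?thesis unfolding W_def by (simp add: real_sqrt_mult)
qed

lemma W_chord_le: assumes "0 \<le> u" "u \<le> z" "z \<le> v" shows "W v * (z - u) \<le> (v - u) * W z"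
proof -
  have a: "v * (z - u) \<le> z * (v - u)"
  proof -
    have "z * (v - u) - v * (z - u) = u * (v - z)" by (simp add: algebra_simps)
    moreover have "0 \<le> u * (v - z)" using assms by simp
    ultimately show ?thesis by linarith
  qed
  have b: "0 \<le> v * (z - u)" using assms by simp
  have "(v * (z - u))^2 \<le> (z * (v - u))^2" using a b by (simp add: power_mono)
  moreover have "(z - u)^2 \<le> (v - u)^2" using assms by (simp add: power_mono)
  moreover have "(v*(z-u))^2 = v^2*(z-u)^2" "(z*(v-u))^2 = z^2*(v-u)^2" by (simp_all add: power_mult_distrib)
  moreover have "(1 + v^2) * (z - u)^2 = (z-u)^2 + v^2*(z-u)^2" "(v - u)^2 * (1 + z^2) = (v-u)^2 + z^2*(v-u)^2"
    by (simp_all add: algebra_simps)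
  ultimately have "(1 + v^2) * (z - u)^2 \<le> (v - u)^2 * (1 + z^2)"
    by linarith
  hence "sqrt ((1 + v^2) * (z - u)^2) \<le> sqrt ((v - u)^2 * (1 + z^2))" by (rule real_sqrt_le_mono)
  thus ?thesis unfolding W_def using assms by (simp add: real_sqrt_mult)
qed

lemma W_chord: assumes "0 \<le> u" "u \<le> z" "z < v" shows "W v * (z - u) < (v - u) * W z"
proof -
  have a: "v * (z - u) \<le> z * (v - u)"
  proof -
    have "z * (v - u) - v * (z - u) = u * (v - z)" by (simp add: algebra_simps)
    moreover have "0 \<le> u * (v - z)" using assms by simp
    ultimately show ?thesis by linarith
  qed
  have b: "0 \<le> v * (z - u)" using assms by simp
  have "(v * (z - u))^2 \<le> (z * (v - u))^2" using a b by (simp add: power_mono)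
  moreover have "(z - u)^2 < (v - u)^2" using assms by (simp add: power_strict_mono)
  moreover have "(v*(z-u))^2 = v^2*(z-u)^2" "(z*(v-u))^2 = z^2*(v-u)^2" by (simp_all add: power_mult_distrib)
  moreover have "(1 + v^2) * (z - u)^2 = (z-u)^2 + v^2*(z-u)^2" "(v - u)^2 * (1 + z^2) = (v-u)^2 + z^2*(v-u)^2"
    by (simp_all add: algebra_simps)
  ultimately have "(1 + v^2) * (z - u)^2 < (v - u)^2 * (1 + z^2)"
    by linarith
  hence "sqrt ((1 + v^2) * (z - u)^2) < sqrt ((v - u)^2 * (1 + z^2))" by (rule real_sqrt_less_mono)
  thus ?thesis unfolding W_def using assms by (simp add: real_sqrt_mult)
qed

lemma relu_nonpos: "z \<le> 0 \<Longrightarrow> relu z = 0" by (simp add: relu_def)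
lemma relu_nonneg: "0 \<le> z \<Longrightarrow> relu z = z" by (simp add: relu_def)
lemma relu_ge0: "0 \<le> relu z" by (simp add: relu_def)
lemma relu_neg: "relu (- z) = relu z - z" by (simp add: relu_def max_def)
lemma relu_pos_mult: "0 < w \<Longrightarrow> relu (w * z) = w * relu z"
  by (simp add: relu_def max_def mult_le_0_iff) (auto simp: zero_le_mult_iff)

definition rs :: "real \<Rightarrow> real \<Rightarrow> real" where "rs e r = sqrt (\<bar>e\<bar> / W r)"
definition ra :: "real \<Rightarrow> real \<Rightarrow> real" where "ra e r = (if e = 0 then 0 else e / rs e r)"
definition rw :: "real \<Rightarrow> real \<Rightarrow> real" where "rw e r = (if e = 0 then 0 else rs e r)"
definition rb :: "real \<Rightarrow> real \<Rightarrow> real" where "rb e r = (if e = 0 then 0 else - rs e r * r)"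

lemma rs_pos: "e \<noteq> 0 \<Longrightarrow> 0 < rs e r"
  unfolding rs_def using W_pos[of r] by simp

lemma realize_val: "ra e r * relu (rw e r * t + rb e r) = e * relu (t - r)"
proof (cases "e = 0")
  case True thus ?thesis by (simp add: ra_def)
next
  case False
  have s: "0 < rs e r" using rs_pos[OF False] .
  have "rw e r * t + rb e r = rs e r * (t - r)" using False by (simp add: rw_def rb_def algebra_simps)
  hence "relu (rw e r * t + rb e r) = rs e r * relu (t - r)" using relu_pos_mult[OF s] by simp
  thus ?thesis using False s by (simp add: ra_def)
qed

lemma realize_cost: "(ra e r)^2 + (rw e r)^2 + (rb e r)^2 = 2 * \<bar>e\<bar> * W r"
proof (cases "e = 0")
  case True thus ?thesis by (simp add: ra_def rw_def rb_def)
next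
  case False
  have Wp: "0 < W r" by (rule W_pos)
  have s2: "(rs e r)^2 = \<bar>e\<bar> / W r" unfolding rs_def using Wp by simp
  have s: "0 < rs e r" using rs_pos[OF False] .
  have "(ra e r)^2 = e^2 / (rs e r)^2" using False by (simp add: ra_def power_divide)
  also have "\<dots> = (\<bar>e\<bar>*\<bar>e\<bar>) / (\<bar>e\<bar> / W r)" using s2 by (simp add: power2_eq_square)
  also have "\<dots> = \<bar>e\<bar> * W r" using False Wp by (simp add: field_simps)
  finally have 1: "(ra e r)^2 = \<bar>e\<bar> * W r" .
  have "(rw e r)^2 + (rb e r)^2 = (rs e r)^2 * (1 + r^2)" using False by (simp add: rw_def rb_def power_mult_distrib algebra_simps)
  also have "\<dots> = ((rs e r)^2 * W r) * W r" using W_sq[of r] by (simp add: power2_eq_square)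
  also have "\<dots> = \<bar>e\<bar> * W r" using s2 Wp by simp
  finally show ?thesis using 1 by simp
qed

lemma neuron_cost:
  fixes a w b :: real
  shows "2 * \<bar>(if w = 0 then 0 else a * \<bar>w\<bar>)\<bar> * W (if w = 0 then 0 else - b / w) \<le> a^2 + w^2 + b^2"
proof (cases "w = 0")
  case True thus ?thesis by simp
next
  case False
  let ?p = "- b / w"
  have bw: "b = - w * ?p" using False by simp
  have "w^2 + b^2 = w^2 * (1 + ?p^2)" using False by (simp add: power_divide field_simps)
  also have "\<dots> = (\<bar>w\<bar> * W ?p)^2" using W_sq[of ?p] by (simp add: power_mult_distrib)
  finally have "w^2 + b^2 = (\<bar>w\<bar> * W ?p)^2" .
  moreover have "2 * \<bar>a\<bar> * (\<bar>w\<bar> * W ?p) \<le> a^2 + (\<bar>w\<bar> * W ?p)^2"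
  proof -
    have "0 \<le> (\<bar>a\<bar> - \<bar>w\<bar> * W ?p)^2" by simp
    thus ?thesis by (simp add: power2_eq_square algebra_simps)
  qed
  ultimately show ?thesis using False by (simp add: abs_mult mult.assoc)
qed

lemma neuron_val:
  fixes a w b t :: real
  shows "a * relu (w * t + b) = (if w = 0 then 0 else a * \<bar>w\<bar>) * relu (t - (if w = 0 then 0 else - b / w))
     + (if w = 0 then a * relu b else if w < 0 then a * b else 0) + (if w < 0 then a * w else 0) * t"
proof (cases "w = 0")
  case True thus ?thesis by simp
next
  case False
  have e: "w * t + b = w * (t - (- b / w))" using False by (simp add: algebra_simps)
  show ?thesis
  proof (cases "w < 0")
    case True
    define z where "z = t - (- b / w)"
    have ez: "w * t + b = w * z" using e z_def by simp
    have "relu (w * z) = (- w) * relu z + w * z"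
    proof (cases "0 \<le> z")
      case True
      hence "w * z \<le> 0" using \<open>w < 0\<close> by (simp add: mult_nonpos_nonneg)
      thus ?thesis using True by (simp add: relu_def)
    next
      case False
      hence "0 < w * z" using \<open>w < 0\<close> by (simp add: mult_neg_neg)
      thus ?thesis using False by (simp add: relu_def)
    qed
    hence "relu (w * t + b) = (- w) * relu (t - (- b / w)) + (w * t + b)"
      using ez z_def by simp
    hence h2: "a * relu (w * t + b) = a * ((- w) * relu (t - (- b / w)) + (w * t + b))" by (simp only:)
    show ?thesis using True False h2 by (simp add: algebra_simps)
  next
    case False2: False
    hence "0 < w" using False by simp
    hence "relu (w * t + b) = w * relu (t - (- b / w))" using e relu_pos_mult by simp
    thus ?thesis using False False2 \<open>0 < w\<close> by simp
  qed
qed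

lemma key_extract:
  assumes "min_norm_interpolant n x y f"
  obtains A B :: real and m :: nat and c p :: "nat \<Rightarrow> real"
  where "\<And>t. f t = A + B * t + (\<Sum>j<m. c j * relu (t - p j))"
    and "\<And>P e1 r1 e2 r2 dA dB. (\<forall>r\<in>{1..n}. (\<Sum>j<m. if P j then c j * relu (x r - p j) else 0)
            = dA + dB * x r + e1 * relu (x r - r1) + e2 * relu (x r - r2))
         \<Longrightarrow> (\<Sum>j<m. if P j then \<bar>c j\<bar> * W (p j) else 0) \<le> \<bar>e1\<bar> * W r1 + \<bar>e2\<bar> * W r2"
proof -
  from assms obtain m a w b a0 b0 where I: "interpolates n x y m a w b a0 b0"
    and F: "f = nn m a w b a0 b0"
    and MIN: "\<And>m' a' w' b' a0' b0'. interpolates n x y m' a' w' b' a0' b0' \<Longrightarrow>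
              param_norm m a w b \<le> param_norm m' a' w' b'"
    unfolding min_norm_interpolant_def by blast
  define c where "c j = (if w j = 0 then 0 else a j * \<bar>w j\<bar>)" for j
  define p where "p j = (if w j = 0 then 0 else - b j / w j)" for j
  define al where "al j = (if w j = 0 then a j * relu (b j) else if w j < 0 then a j * b j else 0)" for j
  define be where "be j = (if w j < 0 then a j * w j else 0)" for j
  have NV: "a j * relu (w j * t + b j) = c j * relu (t - p j) + al j + be j * t" for j t
    unfolding c_def p_def al_def be_def by (rule neuron_val)
  have NC: "2 * \<bar>c j\<bar> * W (p j) \<le> (a j)^2 + (w j)^2 + (b j)^2" for j
    unfolding c_def p_def by (rule neuron_cost)
  define A where "A = b0 + (\<Sum>j<m. al j)"
  define B where "B = a0 + (\<Sum>j<m. be j)"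
  have FF: "f t = A + B * t + (\<Sum>j<m. c j * relu (t - p j))" for t
  proof -
    have "f t = (\<Sum>j<m. c j * relu (t - p j) + al j + be j * t) + a0 * t + b0"
      unfolding F nn_def using NV by simp
    also have "\<dots> = A + B * t + (\<Sum>j<m. c j * relu (t - p j))"
      unfolding A_def B_def by (simp add: sum.distrib sum_distrib_left algebra_simps)
    finally show ?thesis .
  qed
  have KEY: "(\<Sum>j<m. if P j then \<bar>c j\<bar> * W (p j) else 0) \<le> \<bar>e1\<bar> * W r1 + \<bar>e2\<bar> * W r2"
    if H: "\<forall>r\<in>{1..n}. (\<Sum>j<m. if P j then c j * relu (x r - p j) else 0)
            = dA + dB * x r + e1 * relu (x r - r1) + e2 * relu (x r - r2)" for P e1 r1 e2 r2 dA dB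
  proof -
    define a' where "a' j = (if j < m then (if P j then 0 else a j) else if j = m then ra e1 r1 else ra e2 r2)" for j
    define w' where "w' j = (if j < m then (if P j then 0 else w j) else if j = m then rw e1 r1 else rw e2 r2)" for j
    define b' where "b' j = (if j < m then (if P j then 0 else b j) else if j = m then rb e1 r1 else rb e2 r2)" for j
    define a0' where "a0' = a0 + (\<Sum>j<m. if P j then be j else 0) + dB"
    define b0' where "b0' = b0 + (\<Sum>j<m. if P j then al j else 0) + dA"
    have val: "nn (Suc (Suc m)) a' w' b' a0' b0' t = f t - (\<Sum>j<m. if P j then c j * relu (t - p j) else 0)
               + dA + dB * t + e1 * relu (t - r1) + e2 * relu (t - r2)" for t
    proof -
      have s1: "(\<Sum>j<m. a' j * relu (w' j * t + b' j)) =
            (\<Sum>j<m. a j * relu (w j * t + b j)) - (\<Sum>j<m. if P j then c j * relu (t - p j) + al j + be j * t else 0)"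
      proof -
        have "(\<Sum>j<m. a' j * relu (w' j * t + b' j)) = (\<Sum>j<m. a j * relu (w j * t + b j) - (if P j then c j * relu (t - p j) + al j + be j * t else 0))"
          by (rule sum.cong) (auto simp: a'_def w'_def b'_def NV)
        thus ?thesis by (simp add: sum_subtractf)
      qed
      have s2: "(\<Sum>j<m. if P j then c j * relu (t - p j) + al j + be j * t else 0)
          = (\<Sum>j<m. if P j then c j * relu (t - p j) else 0) + (\<Sum>j<m. if P j then al j else 0) + (\<Sum>j<m. if P j then be j else 0) * t"
        by (simp add: sum.distrib[symmetric] sum_distrib_right if_distrib cong: if_cong) (rule sum.cong, auto)
      have "nn (Suc (Suc m)) a' w' b' a0' b0' t = (\<Sum>j<m. a' j * relu (w' j * t + b' j))
           + e1 * relu (t - r1) + e2 * relu (t - r2) + a0' * t + b0'"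
        unfolding nn_def by (simp add: a'_def w'_def b'_def realize_val)
      also have "\<dots> = f t - (\<Sum>j<m. if P j then c j * relu (t - p j) else 0)
               + dA + dB * t + e1 * relu (t - r1) + e2 * relu (t - r2)"
        unfolding s1 s2 F nn_def a0'_def b0'_def by (simp add: algebra_simps)
      finally show ?thesis .
    qed
    have "interpolates n x y (Suc (Suc m)) a' w' b' a0' b0'"
      unfolding interpolates_def
    proof
      fix r assume r: "r \<in> {1..n}"
      have "f (x r) = y r" using I r unfolding interpolates_def F by blast
      thus "nn (Suc (Suc m)) a' w' b' a0' b0' (x r) = y r" using val[of "x r"] H r by simp
    qed
    hence M: "param_norm m a w b \<le> param_norm (Suc (Suc m)) a' w' b'" by (rule MIN)
    let ?N = "\<lambda>j. (a j)^2 + (w j)^2 + (b j)^2"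
    have pn': "param_norm (Suc (Suc m)) a' w' b' = (\<Sum>j<m. if P j then 0 else ?N j) + 2 * \<bar>e1\<bar> * W r1 + 2 * \<bar>e2\<bar> * W r2"
    proof -
      have "(\<Sum>j<m. (a' j)^2 + (w' j)^2 + (b' j)^2) = (\<Sum>j<m. if P j then 0 else ?N j)"
        by (rule sum.cong) (auto simp: a'_def w'_def b'_def)
      thus ?thesis unfolding param_norm_def by (simp add: a'_def w'_def b'_def realize_cost)
    qed
    have pn: "param_norm m a w b = (\<Sum>j<m. if P j then ?N j else 0) + (\<Sum>j<m. if P j then 0 else ?N j)"
      unfolding param_norm_def by (simp add: sum.distrib[symmetric]) (rule sum.cong, auto)
    have "(\<Sum>j<m. if P j then ?N j else 0) \<le> 2 * \<bar>e1\<bar> * W r1 + 2 * \<bar>e2\<bar> * W r2"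
      using M pn pn' by linarith
    moreover have "(\<Sum>j<m. if P j then 2 * (\<bar>c j\<bar> * W (p j)) else 0) \<le> (\<Sum>j<m. if P j then ?N j else 0)"
      by (rule sum_mono) (use NC in \<open>auto simp: mult.assoc\<close>)
    moreover have "(\<Sum>j<m. if P j then 2 * (\<bar>c j\<bar> * W (p j)) else 0) = 2 * (\<Sum>j<m. if P j then \<bar>c j\<bar> * W (p j) else 0)"
      by (simp add: sum_distrib_left if_distrib cong: if_cong)
    ultimately show ?thesis by linarith
  qed
  show ?thesis using that FF KEY by blast
qed

lemma two_kink_pos:
  assumes a0: "0 \<le> a" and aq1: "a < q1" and q1b: "q1 < b" and bq2: "b < q2" and q2d: "q2 < d"
    and C1p: "0 < C1" and C2n: "C2 < 0"
  shows "\<exists>e1 r1 e2 r2. a \<le> r1 \<and> r1 \<le> d \<and> a \<le> r2 \<and> r2 \<le> d \<and> e1 + e2 = C1 + C2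
     \<and> e1*r1 + e2*r2 = C1*q1 + C2*q2 \<and> e1 * relu (b - r1) + e2 * relu (b - r2) = C1 * (b - q1)
     \<and> \<bar>e1\<bar> * W r1 + \<bar>e2\<bar> * W r2 < \<bar>C1\<bar> * W q1 + \<bar>C2\<bar> * W q2"
proof -
  have ba: "0 < b - a" and db: "0 < d - b" using aq1 q1b bq2 q2d by auto
  define K1 where "K1 = C1*(q1-a)/(b-a)"
  define K2 where "K2 = -C2*(d-q2)/(d-b)"
  have K1p: "0 < K1" unfolding K1_def using C1p aq1 ba by simp
  have K2p: "0 < K2"
  proof -
    have "C2*(d-q2) < 0" using C2n q2d by (simp add: mult_neg_pos)
    hence "C2*(d-q2)/(d-b) < 0" using db by (simp add: divide_neg_pos)
    thus ?thesis unfolding K2_def by simp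
  qed
  have K1C: "K1 < C1"
  proof -
    have "C1*(q1-a) < C1*(b-a)" using C1p q1b by simp
    thus ?thesis unfolding K1_def using ba by (simp add: divide_less_eq)
  qed
  have K2C: "K2 < - C2"
  proof -
    have "-C2*(d-q2) < -C2*(d-b)" using C2n bq2 by simp
    hence "-C2*(d-q2)/(d-b) < -C2" using db by (simp add: less_divide_eq)
    thus ?thesis unfolding K2_def by simp
  qed
  have K1e: "K1 * (b - a) = C1*(q1-a)" unfolding K1_def using ba by simp
  have K2e: "K2 * (d - b) = -C2*(d-q2)" unfolding K2_def using db by simp
  show ?thesis
  proof (cases "K1 \<le> K2")
    case True
    define e1 where "e1 = C1*(b-q1)/(b-a)"
    define e2 where "e2 = C1 + C2 - e1"
    have e1e: "e1 * (b - a) = C1*(b-q1)" unfolding e1_def using ba by simp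
    have e1p: "0 < e1" unfolding e1_def using C1p q1b ba by simp
    have "C1 - e1 = K1"
    proof -
      have "(C1 - e1) * (b - a) = K1 * (b - a)" using e1e K1e by (simp add: algebra_simps)
      thus ?thesis using ba by simp
    qed
    hence e2K: "e2 = C2 + K1" unfolding e2_def by simp
    have e2n: "e2 < 0" using e2K True K2C by simp
    define r2 where "r2 = b + C2*(q2-b)/e2"
    have r2e: "(r2 - b) * e2 = C2*(q2-b)" unfolding r2_def using e2n by simp
    have "0 < C2*(q2-b)/e2" using C2n bq2 e2n by (simp add: divide_neg_neg mult_neg_pos)
    hence br2: "b < r2" unfolding r2_def by simp
    have r2d: "r2 \<le> d"
    proof -
      have "K1*(d-b) \<le> K2*(d-b)" using True db by (simp add: mult_right_mono)
      hence "(d - b) * e2 \<le> C2*(q2-b)" using K2e e2K by (simp add: algebra_simps)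
      hence "C2*(q2-b)/e2 \<le> d - b" using e2n by (simp add: neg_divide_le_eq)
      thus ?thesis unfolding r2_def by simp
    qed
    have m1: "e1 + e2 = C1 + C2" unfolding e2_def by simp
    have m3: "e1 * relu (b - a) + e2 * relu (b - r2) = C1 * (b - q1)"
      using ba br2 e1e by (simp add: relu_def)
    have m2: "e1*a + e2*r2 = C1*q1 + C2*q2"
    proof -
      have "e2*r2 = e2*b + (r2-b)*e2" by (simp add: algebra_simps)
      hence "e1*a + e2*r2 = e1*a + e2*b + C2*(q2-b)" using r2e by simp
      also have "\<dots> = C1*b - e1*(b-a) + C2*q2" unfolding e2_def by (simp add: algebra_simps)
      also have "\<dots> = C1*q1 + C2*q2" using e1e by (simp add: algebra_simps)
      finally show ?thesis .
    qed
    define wa where "wa = W a"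
    define wr where "wr = W r2"
    have wrp: "0 < wr" unfolding wr_def by (rule W_pos)
    have wr2: "wr * wr = 1 + r2 * r2" unfolding wr_def using W_sq[of r2] by (simp add: power2_eq_square)
    define lam where "lam = (wa + (1 + a*r2)/wr)/(b-a)"
    define pq1 where "pq1 = -(1+q1*r2)/wr + lam*(b-q1)"
    define pq2 where "pq2 = -(1+q2*r2)/wr"
    have lame: "lam * (b - a) = wa + (1 + a*r2)/wr" unfolding lam_def using ba by simp
    have ident: "e1*wa - e2*wr = C1*pq1 + C2*pq2"
    proof -
      have "e1*wa - e2*wr = e1*(lam*(b-a)) - e1*((1+a*r2)/wr) - e2*((1+r2*r2)/wr)"
        using lame wr2 wrp by (simp add: algebra_simps) (simp add: field_simps)
      also have "\<dots> = lam*(e1*(b-a)) - ((e1+e2) + r2*(e1*a+e2*r2))/wr"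
        using wrp by (simp add: field_simps)
      also have "\<dots> = lam*(C1*(b-q1)) - ((C1+C2) + r2*(C1*q1+C2*q2))/wr"
        using e1e m1 m2 by simp
      also have "\<dots> = C1*pq1 + C2*pq2" unfolding pq1_def pq2_def using wrp by (simp add: field_simps)
      finally show ?thesis .
    qed
    have r2nn: "0 \<le> r2" using br2 a0 aq1 q1b by simp
    have pq1lt: "pq1 < W q1"
    proof -
      define th where "th = (b-q1)/(b-a)"
      have th1: "th < 1" "0 < th" unfolding th_def using ba aq1 q1b by auto
      have "lam*(b-q1) = th*(wa + (1+a*r2)/wr)" unfolding lam_def th_def using ba by (simp add: field_simps)
      hence "pq1 = th*wa + (th*(1+a*r2) - (1+q1*r2))/wr"
        unfolding pq1_def by (simp add: diff_divide_distrib add_divide_distrib algebra_simps)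
      moreover have "th*(1+a*r2) < 1 + q1*r2"
      proof -
        have "th*(1+a*r2) < 1+a*r2" using th1 a0 r2nn by (simp add: add_pos_nonneg)
        moreover have "a*r2 \<le> q1*r2" using aq1 r2nn by (simp add: mult_right_mono)
        ultimately show ?thesis by linarith
      qed
      hence "(th*(1+a*r2) - (1+q1*r2))/wr < 0" using wrp by (simp add: divide_neg_pos)
      moreover have "th*wa \<le> wa" using th1 W_pos[of a] unfolding wa_def by simp
      moreover have "wa \<le> W q1" unfolding wa_def using W_mono[OF a0] aq1 by simp
      ultimately show ?thesis by linarith
    qed
    have pq2ge: "- W q2 \<le> pq2"
    proof -
      have "1 + q2*r2 \<le> W q2 * wr" using W_tan[of q2 r2] unfolding wr_def by simp
      hence "(1 + q2*r2)/wr \<le> W q2" using wrp by (simp add: divide_le_eq)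
      moreover have "pq2 = - ((1 + q2*r2)/wr)" unfolding pq2_def by (simp add: minus_divide_left)
      ultimately show ?thesis by linarith
    qed
    have "C1*pq1 < C1 * W q1" using pq1lt C1p by simp
    moreover have "C2*pq2 \<le> -C2 * W q2"
    proof -
      have "C2 * pq2 \<le> C2 * (- W q2)" using pq2ge C2n by (intro mult_left_mono_neg) auto
      thus ?thesis by simp
    qed
    ultimately have "e1*wa - e2*wr < C1 * W q1 - C2 * W q2" using ident by linarith
    hence cost: "\<bar>e1\<bar> * W a + \<bar>e2\<bar> * W r2 < \<bar>C1\<bar> * W q1 + \<bar>C2\<bar> * W q2"
      using e1p e2n C1p C2n unfolding wa_def wr_def by simp
    show ?thesis
      apply (rule exI[of _ e1], rule exI[of _ a], rule exI[of _ e2], rule exI[of _ r2])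
      using m1 m2 m3 cost r2d br2 a0 aq1 q1b q2d bq2 by auto
  next
    case False
    define e2 where "e2 = C2*(q2-b)/(d-b)"
    define e1 where "e1 = C1 + C2 - e2"
    have e2e: "e2 * (d - b) = C2*(q2-b)" unfolding e2_def using db by simp
    have e2n: "e2 < 0" unfolding e2_def using C2n bq2 db by (simp add: mult_neg_pos divide_neg_pos)
    have "C2 - e2 = - K2"
    proof -
      have "(C2 - e2) * (d - b) = (- K2) * (d - b)" using e2e K2e by (simp add: algebra_simps)
      thus ?thesis using db by (simp only: mult_right_cancel)
    qed
    hence e1K: "e1 = C1 - K2" unfolding e1_def by simp
    have e1p: "0 < e1" using e1K False K1C by simp
    define r1 where "r1 = b - C1*(b-q1)/e1"
    have r1e: "(b - r1) * e1 = C1*(b-q1)" unfolding r1_def using e1p by simp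
    have r1q1: "r1 < q1"
    proof -
      have "(C1 - e1)*(b-q1) > 0" using e1K K2p q1b by simp
      hence "(b - q1) * e1 < C1*(b-q1)" by (simp add: algebra_simps)
      hence "b - q1 < C1*(b-q1)/e1" using e1p by (simp add: less_divide_eq)
      thus ?thesis unfolding r1_def by simp
    qed
    have ar1: "a \<le> r1"
    proof -
      have "K2*(b-a) \<le> K1*(b-a)" using False ba by simp
      hence "C1*(b-q1) \<le> (b - a) * e1" using K1e unfolding e1K by (simp add: algebra_simps)
      hence "C1*(b-q1)/e1 \<le> b - a" using e1p by (simp add: divide_le_eq)
      thus ?thesis unfolding r1_def by simp
    qed
    have m1: "e1 + e2 = C1 + C2" unfolding e1_def by simp
    have m3: "e1 * relu (b - r1) + e2 * relu (b - d) = C1 * (b - q1)"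
      using r1q1 q1b db r1e by (simp add: relu_def algebra_simps)
    have m2: "e1*r1 + e2*d = C1*q1 + C2*q2"
    proof -
      have "e1*r1 = e1*b - (b-r1)*e1" by (simp add: algebra_simps)
      hence "e1*r1 + e2*d = e1*b - C1*(b-q1) + e2*d" using r1e by simp
      also have "\<dots> = C2*b + C1*q1 + e2*(d-b)" unfolding e1_def by (simp add: algebra_simps)
      also have "\<dots> = C1*q1 + C2*q2" using e2e by (simp add: algebra_simps)
      finally show ?thesis .
    qed
    define wd where "wd = W d"
    define w1 where "w1 = W r1"
    have w1p: "0 < w1" unfolding w1_def by (rule W_pos)
    have w12: "w1 * w1 = 1 + r1 * r1" unfolding w1_def using W_sq[of r1] by (simp add: power2_eq_square)
    define mu where "mu = -(wd + (1 + d*r1)/w1)/(d-b)"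
    define pq1 where "pq1 = (1+q1*r1)/w1"
    define pq2 where "pq2 = (1+q2*r1)/w1 + mu*(q2-b)"
    have mue: "mu * (d - b) = -(wd + (1 + d*r1)/w1)" unfolding mu_def using db by simp
    have ident: "e1*w1 - e2*wd = C1*pq1 + C2*pq2"
    proof -
      have A1: "(1+r1*r1)/w1 = w1" using w12 w1p by (simp add: field_simps)
      have A2: "(1+d*r1)/w1 + mu*(d-b) = - wd" using mue by simp
      have "e1*w1 - e2*wd = e1*((1+r1*r1)/w1) + e2*((1+d*r1)/w1 + mu*(d-b))"
        by (simp only: A1 A2)
      also have "\<dots> = e1*((1+r1*r1)/w1) + e2*((1+d*r1)/w1) + mu*(e2*(d-b))"
        by (simp add: algebra_simps)
      finally have "e1*w1 - e2*wd = e1*((1+r1*r1)/w1) + e2*((1+d*r1)/w1) + mu*(e2*(d-b))" .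
      also have "\<dots> = ((e1+e2) + r1*(e1*r1+e2*d))/w1 + mu*(e2*(d-b))"
        using w1p by (simp add: field_simps)
      also have "\<dots> = ((C1+C2) + r1*(C1*q1+C2*q2))/w1 + mu*(C2*(q2-b))"
        using e2e m1 m2 by simp
      also have "\<dots> = C1*pq1 + C2*pq2" unfolding pq1_def pq2_def using w1p by (simp add: field_simps)
      finally show ?thesis .
    qed
    have r1nn: "0 \<le> r1" using ar1 a0 by simp
    have pq1lt: "pq1 < W q1"
    proof -
      have "1 + q1*r1 < W q1 * w1" using W_tan_strict[of q1 r1] r1q1 unfolding w1_def by simp
      thus ?thesis unfolding pq1_def using w1p by (simp add: divide_less_eq)
    qed
    have pq2ge: "- W q2 \<le> pq2"
    proof -
      define th where "th = (q2-b)/(d-b)"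
      have th1: "th < 1" "0 < th" unfolding th_def using db bq2 q2d by auto
      have "mu*(q2-b) = - th*(wd + (1+d*r1)/w1)" unfolding mu_def th_def using db by (simp add: field_simps)
      hence "pq2 = ((1 + q2*r1) - th*(1+d*r1))/w1 - th*wd"
        unfolding pq2_def by (simp add: diff_divide_distrib add_divide_distrib algebra_simps)
      moreover have "th*(1+d*r1) \<le> 1 + q2*r1"
      proof -
        have "th * d \<le> q2"
        proof -
          have "th * (d - b) = q2 - b" unfolding th_def using db by simp
          hence "th * d = q2 - (1 - th) * b" by (simp add: algebra_simps)
          moreover have "0 \<le> (1 - th) * b" using th1 bq2 a0 aq1 q1b by simp
          ultimately show ?thesis by linarith
        qed
        hence "th*d*r1 \<le> q2*r1" using r1nn by (simp add: mult_right_mono)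
        moreover have "th \<le> 1" using th1 by simp
        ultimately show ?thesis by (simp add: algebra_simps)
      qed
      hence "0 \<le> ((1 + q2*r1) - th*(1+d*r1))/w1" using w1p by simp
      moreover have "th * wd \<le> W q2"
      proof -
        have "W d * (q2 - b) \<le> (d - b) * W q2" using W_chord_le[of b q2 d] a0 aq1 q1b bq2 q2d by simp
        thus ?thesis unfolding th_def wd_def using db by (simp add: field_simps)
      qed
      ultimately show ?thesis by linarith
    qed
    have "C1*pq1 < C1 * W q1" using pq1lt C1p by simp
    moreover have "C2*pq2 \<le> -C2 * W q2"
    proof -
      have "C2 * pq2 \<le> C2 * (- W q2)" using pq2ge C2n by (intro mult_left_mono_neg) auto
      thus ?thesis by simp
    qed
    ultimately have "e1*w1 - e2*wd < C1 * W q1 - C2 * W q2" using ident by linarith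
    hence cost: "\<bar>e1\<bar> * W r1 + \<bar>e2\<bar> * W d < \<bar>C1\<bar> * W q1 + \<bar>C2\<bar> * W q2"
      using e1p e2n C1p C2n unfolding wd_def w1_def by simp
    show ?thesis
      apply (rule exI[of _ e1], rule exI[of _ r1], rule exI[of _ e2], rule exI[of _ d])
      using m1 m2 m3 cost ar1 r1q1 a0 aq1 q1b q2d bq2 by auto
  qed
qed

lemma two_kink:
  assumes "0 \<le> a" "a < q1" "q1 < b" "b < q2" "q2 < d" "C1 * C2 < 0"
  shows "\<exists>e1 r1 e2 r2. a \<le> r1 \<and> r1 \<le> d \<and> a \<le> r2 \<and> r2 \<le> d \<and> e1 + e2 = C1 + C2
     \<and> e1*r1 + e2*r2 = C1*q1 + C2*q2 \<and> e1 * relu (b - r1) + e2 * relu (b - r2) = C1 * (b - q1)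
     \<and> \<bar>e1\<bar> * W r1 + \<bar>e2\<bar> * W r2 < \<bar>C1\<bar> * W q1 + \<bar>C2\<bar> * W q2"
proof (cases "0 < C1")
  case True
  hence "C2 < 0" using assms(6) by (simp add: mult_less_0_iff)
  thus ?thesis using two_kink_pos[OF assms(1-5) True] by blast
next
  case False
  hence "C1 < 0" "0 < C2" using assms(6) by (auto simp: mult_less_0_iff)
  hence "0 < - C1" "- C2 < 0" by auto
  from two_kink_pos[OF assms(1-5) this] obtain e1 r1 e2 r2 where
    h: "a \<le> r1 \<and> r1 \<le> d \<and> a \<le> r2 \<and> r2 \<le> d \<and> e1 + e2 = - C1 + - C2
     \<and> e1*r1 + e2*r2 = - C1*q1 + - C2*q2 \<and> e1 * relu (b - r1) + e2 * relu (b - r2) = - C1 * (b - q1)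
     \<and> \<bar>e1\<bar> * W r1 + \<bar>e2\<bar> * W r2 < \<bar>- C1\<bar> * W q1 + \<bar>- C2\<bar> * W q2" by blast
  show ?thesis
    apply (rule exI[of _ "- e1"], rule exI[of _ r1], rule exI[of _ "- e2"], rule exI[of _ r2])
    using h by (auto simp: algebra_simps)
qed

lemma cert_sum:
  fixes g h :: "nat \<Rightarrow> real"
  assumes le: "\<forall>j<m. P j \<longrightarrow> g j \<le> h j"
    and S: "(\<Sum>j<m. if P j then h j else 0) \<le> (\<Sum>j<m. if P j then g j else 0)"
  shows "\<forall>j<m. P j \<longrightarrow> g j = h j"
proof -
  have nn: "\<forall>j\<in>{..<m}. 0 \<le> (if P j then h j - g j else 0)" using le by auto
  have "(\<Sum>j<m. if P j then h j - g j else 0) = (\<Sum>j<m. if P j then h j else 0) - (\<Sum>j<m. if P j then g j else 0)"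
    by (simp add: sum_subtractf[symmetric]) (rule sum.cong, auto)
  hence le0: "(\<Sum>j<m. if P j then h j - g j else 0) \<le> 0" using S by simp
  have "(\<Sum>j<m. if P j then h j - g j else 0) = 0"
  proof -
    have "0 \<le> (\<Sum>j<m. if P j then h j - g j else 0)" by (rule sum_nonneg) (use nn in auto)
    thus ?thesis using le0 by linarith
  qed
  hence "\<forall>j\<in>{..<m}. (if P j then h j - g j else 0) = 0"
    using sum_nonneg_eq_0_iff[of "{..<m}" "\<lambda>j. if P j then h j - g j else 0"] nn by simp
  thus ?thesis by (metis lessThan_iff eq_iff_diff_eq_0)
qed

lemma phi_bound:
  assumes "0 \<le> u" "u < v" "u \<le> z" "z \<le> v"
  shows "\<bar>W u * (v - z) - W v * (z - u)\<bar> \<le> (v - u) * W z"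
    and "u < z \<Longrightarrow> z < v \<Longrightarrow> \<bar>W u * (v - z) - W v * (z - u)\<bar> < (v - u) * W z"
proof -
  have Wu: "W u \<le> W z" using W_mono assms by simp
  have Wpos: "0 < W u" "0 < W v" "0 < W z" using W_pos by auto
  have a1: "W u * (v - z) \<le> W z * (v - z)" using Wu assms by (simp add: mult_right_mono)
  have a2: "W z * (v - z) \<le> W z * (v - u)" using Wpos assms by (simp add: mult_left_mono)
  have b1: "W v * (z - u) \<le> (v - u) * W z" using W_chord_le assms by simp
  have c1: "0 \<le> W u * (v - z)" "0 \<le> W v * (z - u)" using Wpos assms by auto
  show "\<bar>W u * (v - z) - W v * (z - u)\<bar> \<le> (v - u) * W z"
    using a1 a2 b1 c1 by (simp add: abs_le_iff algebra_simps)
  assume uz: "u < z" and zv: "z < v"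
  have a2': "W z * (v - z) < W z * (v - u)" using Wpos uz by (simp add: mult_strict_left_mono)
  have b1': "W v * (z - u) < (v - u) * W z" using W_chord assms zv by simp
  show "\<bar>W u * (v - z) - W v * (z - u)\<bar> < (v - u) * W z"
    using a1 a2' b1' c1 by (simp add: abs_less_iff algebra_simps)
qed

locale mnk =
  fixes n :: nat and x y :: "nat \<Rightarrow> real" and A B :: real and m :: nat and c p :: "nat \<Rightarrow> real"
  assumes n2: "n \<ge> 2" and x1nn: "0 \<le> x 1"
    and xinc: "\<forall>i. 1 \<le> i \<and> i < n \<longrightarrow> x i < x (i+1)"
    and interp: "\<forall>r\<in>{1..n}. A + B * x r + (\<Sum>j<m. c j * relu (x r - p j)) = y r"
    and key: "\<And>P e1 r1 e2 r2 dA dB. (\<forall>r\<in>{1..n}. (\<Sum>j<m. if P j then c j * relu (x r - p j) else 0)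
            = dA + dB * x r + e1 * relu (x r - r1) + e2 * relu (x r - r2))
         \<Longrightarrow> (\<Sum>j<m. if P j then \<bar>c j\<bar> * W (p j) else 0) \<le> \<bar>e1\<bar> * W r1 + \<bar>e2\<bar> * W r2"
begin

definition kv where "kv t = A + B * t + (\<Sum>j<m. c j * relu (t - p j))"
definition sR where "sR u = B + (\<Sum>j<m. if p j \<le> u then c j else 0)"
definition sL where "sL u = B + (\<Sum>j<m. if p j < u then c j else 0)"

lemma kv_interp: "1 \<le> r \<Longrightarrow> r \<le> n \<Longrightarrow> kv (x r) = y r"
  using interp unfolding kv_def by auto

lemma x_le: assumes "1 \<le> i" "i \<le> j" "j \<le> n" shows "x i \<le> x j"
proof -
  have "j \<le> n \<longrightarrow> x i \<le> x j" using assms(2)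
  proof (induction j rule: dec_induct)
    case base thus ?case by simp
  next
    case (step k)
    show ?case
    proof
      assume "Suc k \<le> n"
      hence "x k < x (k+1)" using xinc step.hyps assms(1) by auto
      thus "x i \<le> x (Suc k)" using step.IH \<open>Suc k \<le> n\<close> by simp
    qed
  qed
  thus ?thesis using assms by simp
qed

lemma x_lt: assumes "1 \<le> i" "i < j" "j \<le> n" shows "x i < x j"
proof -
  have "x i < x (i+1)" using xinc assms by auto
  moreover have "x (i+1) \<le> x j" using x_le assms by simp
  ultimately show ?thesis by simp
qed

lemma x_nn: "1 \<le> i \<Longrightarrow> i \<le> n \<Longrightarrow> 0 \<le> x i"
  using x_le[of 1 i] x1nn by simp

lemma sum_at_q:
  assumes "\<forall>j<m. P j \<and> c j \<noteq> 0 \<longrightarrow> p j = q" "\<forall>j<m. p j = q \<longrightarrow> P j"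
  shows "(\<Sum>j<m. if P j then c j * g (p j) else 0) = (\<Sum>j<m. if p j = q then c j else 0) * g q"
proof -
  have "(\<Sum>j<m. if P j then c j * g (p j) else 0) = (\<Sum>j<m. (if p j = q then c j else 0) * g q)"
    by (rule sum.cong) (use assms in auto)
  thus ?thesis by (simp add: sum_distrib_right)
qed

lemma lin_sum:
  "(\<Sum>j<m. if P j then c j * (X - p j) else 0) = X * (\<Sum>j<m. if P j then c j else 0) - (\<Sum>j<m. if P j then c j * p j else 0)"
proof -
  have "(\<Sum>j<m. if P j then c j * (X - p j) else 0) = (\<Sum>j<m. X * (if P j then c j else 0) - (if P j then c j * p j else 0))"
    by (rule sum.cong) (auto simp: algebra_simps)
  thus ?thesis by (simp add: sum_subtractf sum_distrib_left)
qed

lemma region: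
  assumes k: "1 \<le> k" "k < n"
    and P: "\<forall>j<m. P j \<longrightarrow> x k \<le> p j \<and> p j \<le> x (k+1)"
    and r: "x k \<le> r1" "r1 \<le> x (k+1)" "x k \<le> r2" "r2 \<le> x (k+1)"
    and M1: "(\<Sum>j<m. if P j then c j else 0) = e1 + e2"
    and M2: "(\<Sum>j<m. if P j then c j * p j else 0) = e1 * r1 + e2 * r2"
  shows "(\<Sum>j<m. if P j then \<bar>c j\<bar> * W (p j) else 0) \<le> \<bar>e1\<bar> * W r1 + \<bar>e2\<bar> * W r2"
proof (rule key[where dA = 0 and dB = 0], intro ballI)
  fix i assume i: "i \<in> {1..n}"
  show "(\<Sum>j<m. if P j then c j * relu (x i - p j) else 0) = 0 + 0 * x i + e1 * relu (x i - r1) + e2 * relu (x i - r2)"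
  proof (cases "i \<le> k")
    case True
    hence xi: "x i \<le> x k" using x_le i k by auto
    have "(\<Sum>j<m. if P j then c j * relu (x i - p j) else 0) = 0"
      by (rule sum.neutral) (use P xi in \<open>auto simp: relu_def\<close>)
    moreover have "relu (x i - r1) = 0" "relu (x i - r2) = 0" using xi r by (auto simp: relu_def)
    ultimately show ?thesis by simp
  next
    case False
    hence xi: "x (k+1) \<le> x i" using x_le i k by auto
    have "(\<Sum>j<m. if P j then c j * relu (x i - p j) else 0) = (\<Sum>j<m. if P j then c j * (x i - p j) else 0)"
      by (rule sum.cong) (use P xi in \<open>auto simp: relu_def\<close>)
    also have "\<dots> = x i * (e1 + e2) - (e1 * r1 + e2 * r2)" using lin_sum M1 M2 by simp
    also have "\<dots> = 0 + 0 * x i + e1 * relu (x i - r1) + e2 * relu (x i - r2)"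
      using xi r by (simp add: relu_def algebra_simps)
    finally show ?thesis .
  qed
qed

definition Sk where "Sk k j \<longleftrightarrow> x k \<le> p j \<and> p j \<le> x (k+1)"
definition U where "U k = (\<Sum>j<m. if Sk k j then c j * (x (k+1) - p j) else 0)"
definition V where "V k = (\<Sum>j<m. if Sk k j then c j * (p j - x k) else 0)"

lemma UV_sum: "U k + V k = (x (k+1) - x k) * (\<Sum>j<m. if Sk k j then c j else 0)"
proof -
  have "U k + V k = (\<Sum>j<m. (x (k+1) - x k) * (if Sk k j then c j else 0))"
    unfolding U_def V_def by (simp add: sum.distrib[symmetric]) (rule sum.cong, auto simp: algebra_simps)
  thus ?thesis by (simp add: sum_distrib_left)
qed

lemma UV_mom: "x k * U k + x (k+1) * V k = (x (k+1) - x k) * (\<Sum>j<m. if Sk k j then c j * p j else 0)"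
proof -
  have "x k * U k + x (k+1) * V k = (\<Sum>j<m. (x (k+1) - x k) * (if Sk k j then c j * p j else 0))"
    unfolding U_def V_def by (simp add: sum_distrib_left sum.distrib[symmetric]) (rule sum.cong, auto simp: algebra_simps)
  thus ?thesis by (simp add: sum_distrib_left)
qed

end

context mnk begin

lemma GL_a:
  assumes k: "1 \<le> k" "k < n" and UV: "U k * V k \<le> 0"
  shows "\<forall>j<m. x k < p j \<and> p j < x (k+1) \<longrightarrow> c j = 0"
proof -
  define u where "u = x k"
  define v where "v = x (k+1)"
  define L where "L = v - u"
  have uv: "u < v" unfolding u_def v_def using xinc k by auto
  have Lp: "0 < L" unfolding L_def using uv by simp
  have u0: "0 \<le> u" unfolding u_def using x_nn k by simp
  define e1 where "e1 = U k / L"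
  define e2 where "e2 = V k / L"
  have M1: "(\<Sum>j<m. if Sk k j then c j else 0) = e1 + e2"
  proof -
    have "(\<Sum>j<m. if Sk k j then c j else 0) = (U k + V k) / L"
      using UV_sum[of k] Lp unfolding L_def u_def v_def by (simp add: eq_divide_eq mult.commute)
    thus ?thesis unfolding e1_def e2_def by (simp add: add_divide_distrib)
  qed
  have M2: "(\<Sum>j<m. if Sk k j then c j * p j else 0) = e1 * u + e2 * v"
  proof -
    have "(\<Sum>j<m. if Sk k j then c j * p j else 0) = (u * U k + v * V k) / L"
      using UV_mom[of k] Lp unfolding L_def u_def v_def by (simp add: eq_divide_eq mult.commute)
    thus ?thesis unfolding e1_def e2_def by (simp add: add_divide_distrib mult.commute)
  qed
  have R: "(\<Sum>j<m. if Sk k j then \<bar>c j\<bar> * W (p j) else 0) \<le> \<bar>e1\<bar> * W u + \<bar>e2\<bar> * W v"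
    by (rule region[OF k _ _ _ _ _ M1 M2]) (use uv in \<open>auto simp: Sk_def u_def v_def\<close>)
  define sg :: real where "sg = (if 0 \<le> U k \<and> V k \<le> 0 then 1 else -1)"
  define al where "al = sg / L"
  define phi where "phi z = al * (W u * (v - z) - W v * (z - u))" for z
  have sphi: "(\<Sum>j<m. if Sk k j then c j * phi (p j) else 0) = sg * (W u * U k - W v * V k) / L"
  proof -
    have "(\<Sum>j<m. if Sk k j then c j * phi (p j) else 0) =
       (\<Sum>j<m. (al * W u) * (if Sk k j then c j * (v - p j) else 0) - (al * W v) * (if Sk k j then c j * (p j - u) else 0))"
      by (rule sum.cong) (auto simp: phi_def algebra_simps)
    also have "\<dots> = (al * W u) * U k - (al * W v) * V k"
      unfolding U_def V_def u_def v_def by (simp add: sum_subtractf sum_distrib_left)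
    finally show ?thesis unfolding al_def by (simp add: algebra_simps diff_divide_distrib add_divide_distrib)
  qed
  have sgv: "sg * (W u * U k - W v * V k) / L = \<bar>e1\<bar> * W u + \<bar>e2\<bar> * W v"
  proof (cases "0 \<le> U k \<and> V k \<le> 0")
    case True
    thus ?thesis unfolding sg_def e1_def e2_def using Lp by (simp add: abs_of_nonneg abs_of_nonpos field_simps)
  next
    case False
    hence "U k \<le> 0 \<and> 0 \<le> V k" using UV by (auto simp: mult_le_0_iff)
    moreover have "sg = -1" unfolding sg_def using False by simp
    ultimately show ?thesis unfolding e1_def e2_def using Lp by (simp add: abs_of_nonneg abs_of_nonpos field_simps)
  qed
  have sg1: "\<bar>sg\<bar> = 1" unfolding sg_def by simp
  have phib: "\<bar>phi z\<bar> \<le> W z" if "u \<le> z" "z \<le> v" for z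
  proof -
    have "\<bar>phi z\<bar> = \<bar>W u * (v - z) - W v * (z - u)\<bar> / L" unfolding phi_def al_def using sg1 Lp by (simp add: abs_mult)
    also have "\<dots> \<le> W z"
    proof -
      have "\<bar>W u * (v - z) - W v * (z - u)\<bar> \<le> W z * L" using phi_bound(1)[OF u0 uv that] unfolding L_def by (simp add: mult.commute)
      thus ?thesis using Lp by (simp only: pos_divide_le_eq)
    qed
    finally show ?thesis .
  qed
  have phis: "\<bar>phi z\<bar> < W z" if "u < z" "z < v" for z
  proof -
    have "\<bar>phi z\<bar> = \<bar>W u * (v - z) - W v * (z - u)\<bar> / L" unfolding phi_def al_def using sg1 Lp by (simp add: abs_mult)
    also have "\<dots> < W z"
    proof -
      have "\<bar>W u * (v - z) - W v * (z - u)\<bar> < W z * L" using phi_bound(2)[OF u0 uv _ _ that] that unfolding L_def by (simp add: mult.commute)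
      thus ?thesis using Lp by (simp only: pos_divide_less_eq)
    qed
    finally show ?thesis .
  qed
  have le: "\<forall>j<m. Sk k j \<longrightarrow> c j * phi (p j) \<le> \<bar>c j\<bar> * W (p j)"
  proof (intro allI impI)
    fix j assume "j < m" "Sk k j"
    hence "u \<le> p j" "p j \<le> v" unfolding Sk_def u_def v_def by auto
    hence "\<bar>phi (p j)\<bar> \<le> W (p j)" by (rule phib)
    hence "\<bar>c j\<bar> * \<bar>phi (p j)\<bar> \<le> \<bar>c j\<bar> * W (p j)" by (simp add: mult_left_mono)
    moreover have "c j * phi (p j) \<le> \<bar>c j\<bar> * \<bar>phi (p j)\<bar>" using abs_ge_self[of "c j * phi (p j)"] by (simp add: abs_mult)
    ultimately show "c j * phi (p j) \<le> \<bar>c j\<bar> * W (p j)" by linarith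
  qed
  have eq: "\<forall>j<m. Sk k j \<longrightarrow> c j * phi (p j) = \<bar>c j\<bar> * W (p j)"
    by (rule cert_sum[OF le]) (use R sphi sgv in simp)
  show ?thesis
  proof (intro allI impI)
    fix j assume j: "j < m" "x k < p j \<and> p j < x (k+1)"
    hence S: "Sk k j" unfolding Sk_def by simp
    have "u < p j" "p j < v" using j unfolding u_def v_def by auto
    hence st: "\<bar>phi (p j)\<bar> < W (p j)" by (rule phis)
    show "c j = 0"
    proof (rule ccontr)
      assume "c j \<noteq> 0"
      hence "\<bar>c j\<bar> * \<bar>phi (p j)\<bar> < \<bar>c j\<bar> * W (p j)" using st by simp
      moreover have "c j * phi (p j) \<le> \<bar>c j\<bar> * \<bar>phi (p j)\<bar>" using abs_ge_self[of "c j * phi (p j)"] by (simp add: abs_mult)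
      moreover have "c j * phi (p j) = \<bar>c j\<bar> * W (p j)" using eq j S by blast
      ultimately show False by linarith
    qed
  qed
qed

lemma GL_b:
  assumes k: "1 \<le> k" "k < n" and UV: "0 < U k * V k"
  shows "\<exists>q. x k < q \<and> q < x (k+1) \<and> (\<forall>j<m. Sk k j \<and> c j \<noteq> 0 \<longrightarrow> p j = q)"
proof -
  define u where "u = x k"
  define v where "v = x (k+1)"
  define L where "L = v - u"
  have uv: "u < v" unfolding u_def v_def using xinc k by auto
  have Lp: "0 < L" unfolding L_def using uv by simp
  define T where "T = U k + V k"
  have same: "(0 < U k \<and> 0 < V k) \<or> (U k < 0 \<and> V k < 0)" using UV by (auto simp: zero_less_mult_iff)
  have Tnz: "T \<noteq> 0" using same unfolding T_def by auto
  define q where "q = u + V k * L / T"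
  have th: "0 < V k / T" "V k / T < 1" using same unfolding T_def by (auto simp: divide_less_eq_1 zero_less_divide_iff)
  have qe: "q = u + (V k / T) * L" unfolding q_def by simp
  have uq: "u < q" unfolding qe using mult_pos_pos[OF th(1) Lp] by linarith
  have qv: "q < v"
  proof -
    have "(V k / T) * L < 1 * L" using th Lp by (intro mult_strict_right_mono) auto
    thus ?thesis unfolding qe L_def by simp
  qed
  define e1 where "e1 = T / L"
  have M1: "(\<Sum>j<m. if Sk k j then c j else 0) = e1 + 0"
    using UV_sum[of k] Lp unfolding e1_def T_def L_def u_def v_def by (simp add: field_simps)
  have M2: "(\<Sum>j<m. if Sk k j then c j * p j else 0) = e1 * q + 0 * q"
  proof -
    have "(\<Sum>j<m. if Sk k j then c j * p j else 0) = (u * U k + v * V k) / L"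
      using UV_mom[of k] Lp unfolding L_def u_def v_def by (simp add: field_simps)
    also have "\<dots> = u * T / L + V k" using Lp unfolding T_def L_def by (simp add: field_simps)
    also have "\<dots> = e1 * q" unfolding e1_def qe using Lp Tnz by (simp add: field_simps)
    finally show ?thesis by simp
  qed
  have R: "(\<Sum>j<m. if Sk k j then \<bar>c j\<bar> * W (p j) else 0) \<le> \<bar>e1\<bar> * W q + \<bar>0\<bar> * W q"
    by (rule region[OF k _ _ _ _ _ M1 M2]) (use uq qv in \<open>auto simp: Sk_def u_def v_def\<close>)
  define sg :: real where "sg = (if 0 < e1 then 1 else -1)"
  define al where "al = sg / W q"
  define phi where "phi z = al * (1 + z * q)" for z
  have Wq: "0 < W q" by (rule W_pos)
  have sphi: "(\<Sum>j<m. if Sk k j then c j * phi (p j) else 0) = sg * (e1 + q * (e1 * q)) / W q"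
  proof -
    have "(\<Sum>j<m. if Sk k j then c j * phi (p j) else 0) =
       (\<Sum>j<m. al * (if Sk k j then c j else 0) + (al * q) * (if Sk k j then c j * p j else 0))"
      by (rule sum.cong) (auto simp: phi_def algebra_simps)
    also have "\<dots> = al * e1 + (al * q) * (e1 * q)"
      using M1 M2 by (simp add: sum.distrib sum_distrib_left[symmetric])
    finally show ?thesis unfolding al_def by (simp add: algebra_simps diff_divide_distrib add_divide_distrib)
  qed
  have sgv: "sg * (e1 + q * (e1 * q)) / W q = \<bar>e1\<bar> * W q"
  proof -
    have "e1 + q * (e1 * q) = e1 * (W q * W q)" using W_sq[of q] by (simp add: power2_eq_square algebra_simps)
    hence "sg * (e1 + q * (e1 * q)) / W q = sg * e1 * W q" using Wq by simp
    thus ?thesis unfolding sg_def by (auto simp: abs_if)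
  qed
  have sg1: "\<bar>sg\<bar> = 1" unfolding sg_def by simp
  have absphi: "\<bar>phi z\<bar> = \<bar>1 + z * q\<bar> / W q" for z unfolding phi_def al_def using sg1 Wq by (simp add: abs_mult)
  have le: "\<forall>j<m. Sk k j \<longrightarrow> c j * phi (p j) \<le> \<bar>c j\<bar> * W (p j)"
  proof (intro allI impI)
    fix j assume "j < m" "Sk k j"
    have "\<bar>phi (p j)\<bar> \<le> W (p j)" unfolding absphi using W_tan[of "p j" q] Wq by (simp add: divide_le_eq)
    hence "\<bar>c j\<bar> * \<bar>phi (p j)\<bar> \<le> \<bar>c j\<bar> * W (p j)" by (simp add: mult_left_mono)
    moreover have "c j * phi (p j) \<le> \<bar>c j\<bar> * \<bar>phi (p j)\<bar>" using abs_ge_self[of "c j * phi (p j)"] by (simp add: abs_mult)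
    ultimately show "c j * phi (p j) \<le> \<bar>c j\<bar> * W (p j)" by linarith
  qed
  have eq: "\<forall>j<m. Sk k j \<longrightarrow> c j * phi (p j) = \<bar>c j\<bar> * W (p j)"
    by (rule cert_sum[OF le]) (use R sphi sgv in simp)
  have "\<forall>j<m. Sk k j \<and> c j \<noteq> 0 \<longrightarrow> p j = q"
  proof (intro allI impI)
    fix j assume j: "j < m" "Sk k j \<and> c j \<noteq> 0"
    show "p j = q"
    proof (rule ccontr)
      assume "p j \<noteq> q"
      hence "\<bar>phi (p j)\<bar> < W (p j)" unfolding absphi using W_tan_strict[of "p j" q] Wq by (simp add: divide_less_eq)
      hence "\<bar>c j\<bar> * \<bar>phi (p j)\<bar> < \<bar>c j\<bar> * W (p j)" using j by simp
      moreover have "c j * phi (p j) \<le> \<bar>c j\<bar> * \<bar>phi (p j)\<bar>" using abs_ge_self[of "c j * phi (p j)"] by (simp add: abs_mult)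
      moreover have "c j * phi (p j) = \<bar>c j\<bar> * W (p j)" using eq j by blast
      ultimately show False by linarith
    qed
  qed
  thus ?thesis using uq qv unfolding u_def v_def by blast
qed

lemma dich:
  assumes k: "1 \<le> k" "k < n"
  shows "(\<forall>j<m. x k < p j \<and> p j < x (k+1) \<longrightarrow> c j = 0) \<or>
    (\<exists>q C. x k < q \<and> q < x (k+1) \<and> (\<forall>j<m. Sk k j \<and> c j \<noteq> 0 \<longrightarrow> p j = q)
         \<and> C = (\<Sum>j<m. if p j = q then c j else 0) \<and> C \<noteq> 0)"
proof (cases "U k * V k \<le> 0")
  case True thus ?thesis using GL_a[OF k] by blast
next
  case False
  hence UV: "0 < U k * V k" by simp
  then obtain q where q: "x k < q" "q < x (k+1)" "\<forall>j<m. Sk k j \<and> c j \<noteq> 0 \<longrightarrow> p j = q"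
    using GL_b[OF k] by blast
  define C where "C = (\<Sum>j<m. if p j = q then c j else 0)"
  have h2: "\<forall>j<m. p j = q \<longrightarrow> Sk k j" using q(1,2) unfolding Sk_def by auto
  have "U k = C * (x (k+1) - q)"
    unfolding U_def C_def by (rule sum_at_q[OF q(3) h2])
  moreover have "U k \<noteq> 0" using UV by auto
  ultimately have Cnz: "C \<noteq> 0" by auto
  show ?thesis
    apply (rule disjI2)
    apply (rule exI[of _ q], rule exI[of _ C])
    using q Cnz C_def by simp
qed

lemma kv_shift:
  assumes "u \<le> t"
  shows "kv t = kv u + sR u * (t - u) + (\<Sum>j<m. if u < p j then c j * relu (t - p j) else 0)"
proof -
  have pw: "c j * relu (t - p j) = c j * relu (u - p j) + (t - u) * (if p j \<le> u then c j else 0)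
       + (if u < p j then c j * relu (t - p j) else 0)" for j
  proof (cases "p j \<le> u")
    case True
    hence e1: "relu (t - p j) = t - p j" and e2: "relu (u - p j) = u - p j" using assms by (auto simp: relu_def)
    show ?thesis unfolding e1 e2 using True by (simp add: algebra_simps)
  next
    case False
    hence "relu (u - p j) = 0" by (simp add: relu_def)
    thus ?thesis using False by simp
  qed
  have "(\<Sum>j<m. c j * relu (t - p j)) = (\<Sum>j<m. c j * relu (u - p j)) + (t - u) * (\<Sum>j<m. if p j \<le> u then c j else 0)
       + (\<Sum>j<m. if u < p j then c j * relu (t - p j) else 0)"
    by (simp add: pw sum.distrib sum_distrib_left)
  thus ?thesis unfolding kv_def sR_def by (simp add: algebra_simps)
qed

lemma slope_eq: "1 \<le> k \<Longrightarrow> k < n \<Longrightarrow> slope x y k = (y (k+1) - y k) / (x (k+1) - x k)"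
  unfolding slope_def by simp

lemma flat_facts:
  assumes k: "1 \<le> k" "k < n" and Z: "\<forall>j<m. x k < p j \<and> p j < x (k+1) \<longrightarrow> c j = 0"
  shows "sR (x k) = slope x y k" "sL (x (k+1)) = slope x y k"
    "\<And>t. x k \<le> t \<Longrightarrow> t \<le> x (k+1) \<Longrightarrow> kv t = y k + slope x y k * (t - x k)"
proof -
  have uv: "x k < x (k+1)" using xinc k by auto
  have F: "kv t = y k + sR (x k) * (t - x k)" if t: "x k \<le> t" "t \<le> x (k+1)" for t
  proof -
    have "(\<Sum>j<m. if x k < p j then c j * relu (t - p j) else 0) = 0"
    proof (rule sum.neutral, intro ballI)
      fix j assume "j \<in> {..<m}"
      thus "(if x k < p j then c j * relu (t - p j) else 0) = 0"
        using Z t by (cases "p j < x (k+1)") (auto simp: relu_def)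
    qed
    thus ?thesis using kv_shift[OF t(1)] kv_interp[of k] k by simp
  qed
  have "y (k+1) = y k + sR (x k) * (x (k+1) - x k)" using F[of "x (k+1)"] uv kv_interp[of "k+1"] k by simp
  thus s: "sR (x k) = slope x y k" unfolding slope_def using uv by (simp add: field_simps)
  show "x k \<le> t \<Longrightarrow> t \<le> x (k+1) \<Longrightarrow> kv t = y k + slope x y k * (t - x k)" for t using F s by simp
  have "(\<Sum>j<m. if p j < x (k+1) then c j else 0) = (\<Sum>j<m. if p j \<le> x k then c j else 0)"
    by (rule sum.cong) (use Z uv in auto)
  thus "sL (x (k+1)) = slope x y k" using s unfolding sL_def sR_def by simp
qed

lemma mono_facts:
  assumes k: "1 \<le> k" "k < n" and q: "x k < q" "q < x (k+1)"
    and Q: "\<forall>j<m. Sk k j \<and> c j \<noteq> 0 \<longrightarrow> p j = q"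
    and C: "C = (\<Sum>j<m. if p j = q then c j else 0)"
  shows "sL (x k) = sR (x k)" "sR (x (k+1)) = sL (x (k+1))" "sL (x (k+1)) = sR (x k) + C"
    "slope x y k = sR (x k) + C * ((x (k+1) - q) / (x (k+1) - x k))"
    "\<And>t. x k \<le> t \<Longrightarrow> t \<le> x (k+1) \<Longrightarrow> kv t = y k + sR (x k) * (t - x k) + C * relu (t - q)"
proof -
  have uv: "x k < x (k+1)" using xinc k by auto
  have "(\<Sum>j<m. if p j < x k then c j else 0) = (\<Sum>j<m. if p j \<le> x k then c j else 0)"
    by (rule sum.cong) (use Q q in \<open>auto simp: Sk_def\<close>)
  thus "sL (x k) = sR (x k)" unfolding sL_def sR_def by simp
  have "(\<Sum>j<m. if p j < x (k+1) then c j else 0) = (\<Sum>j<m. if p j \<le> x (k+1) then c j else 0)"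
    by (rule sum.cong) (use Q q in \<open>auto simp: Sk_def\<close>)
  thus "sR (x (k+1)) = sL (x (k+1))" unfolding sL_def sR_def by simp
  have "(\<Sum>j<m. if p j < x (k+1) then c j else 0) = (\<Sum>j<m. (if p j \<le> x k then c j else 0) + (if p j = q then c j else 0))"
  proof (rule sum.cong)
    fix j assume j: "j \<in> {..<m}"
    show "(if p j < x (k+1) then c j else 0) = (if p j \<le> x k then c j else 0) + (if p j = q then c j else 0)"
    proof (cases "p j = q")
      case True thus ?thesis using q by simp
    next
      case False
      show ?thesis
      proof (cases "x k < p j \<and> p j < x (k+1)")
        case True
        hence "c j = 0" using Q j False by (auto simp: Sk_def)
        thus ?thesis by simp
      next
        case False2: False
        thus ?thesis using False uv by auto
      qed
    qed
  qed simp
  thus "sL (x (k+1)) = sR (x k) + C" unfolding sL_def sR_def C by (simp add: sum.distrib)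
  have F: "kv t = y k + sR (x k) * (t - x k) + C * relu (t - q)" if t: "x k \<le> t" "t \<le> x (k+1)" for t
  proof -
    have "(\<Sum>j<m. if x k < p j then c j * relu (t - p j) else 0) = (\<Sum>j<m. (if p j = q then c j else 0) * relu (t - q))"
    proof (rule sum.cong)
      fix j assume j: "j \<in> {..<m}"
      show "(if x k < p j then c j * relu (t - p j) else 0) = (if p j = q then c j else 0) * relu (t - q)"
      proof (cases "p j = q")
        case True thus ?thesis using q by simp
      next
        case False
        show ?thesis
        proof (cases "x k < p j \<and> p j \<le> x (k+1)")
          case True
          hence "c j = 0" using Q j False by (auto simp: Sk_def)
          thus ?thesis by simp
        next
          case False2: False
          show ?thesis
          proof (cases "x k < p j")
            case True
            hence "t \<le> p j" using False2 t by auto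
            hence "relu (t - p j) = 0" by (simp add: relu_def)
            thus ?thesis using False by simp
          next
            case False
            thus ?thesis using \<open>p j \<noteq> q\<close> by simp
          qed
        qed
      qed
    qed simp
    hence "(\<Sum>j<m. if x k < p j then c j * relu (t - p j) else 0) = C * relu (t - q)"
      unfolding C by (simp add: sum_distrib_right)
    thus ?thesis using kv_shift[OF t(1)] kv_interp[of k] k by simp
  qed
  show "x k \<le> t \<Longrightarrow> t \<le> x (k+1) \<Longrightarrow> kv t = y k + sR (x k) * (t - x k) + C * relu (t - q)" for t using F by simp
  have "y (k+1) = y k + sR (x k) * (x (k+1) - x k) + C * (x (k+1) - q)"
    using F[of "x (k+1)"] uv q kv_interp[of "k+1"] k by (simp add: relu_def)
  hence "y (k+1) - y k = sR (x k) * (x (k+1) - x k) + C * (x (k+1) - q)" by simp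
  hence "(y (k+1) - y k) / (x (k+1) - x k) = sR (x k) * (x (k+1) - x k) / (x (k+1) - x k) + C * ((x (k+1) - q) / (x (k+1) - x k))"
    by (simp add: add_divide_distrib)
  thus "slope x y k = sR (x k) + C * ((x (k+1) - q) / (x (k+1) - x k))"
    unfolding slope_def using uv by simp
qed

end

definition betw :: "real \<Rightarrow> real \<Rightarrow> real \<Rightarrow> bool" where
  "betw a b s \<longleftrightarrow> (a \<le> s \<and> s \<le> b) \<or> (b \<le> s \<and> s \<le> a)"

context mnk begin

lemma bump:
  assumes k: "1 \<le> k" "k + 2 \<le> n"
    and q1: "x k < q1" "q1 < x (k+1)" and Q1: "\<forall>j<m. Sk k j \<and> c j \<noteq> 0 \<longrightarrow> p j = q1"
    and C1: "C1 = (\<Sum>j<m. if p j = q1 then c j else 0)"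
    and q2: "x (k+1) < q2" "q2 < x (k+1+1)" and Q2: "\<forall>j<m. Sk (k+1) j \<and> c j \<noteq> 0 \<longrightarrow> p j = q2"
    and C2: "C2 = (\<Sum>j<m. if p j = q2 then c j else 0)"
    and CC: "C1 * C2 < 0"
  shows False
proof -
  define P where "P j \<longleftrightarrow> x k \<le> p j \<and> p j \<le> x (k+1+1)" for j
  have q12: "q1 < q2" using q1 q2 by simp
  have xk0: "0 \<le> x k" using x_nn k by simp
  have pw: "(if P j then h (c j) * g (p j) else 0) = (if p j = q1 then h (c j) else 0) * g q1 + (if p j = q2 then h (c j) else 0) * g q2"
    if j: "j < m" and h0: "h 0 = 0" for j and h :: "real \<Rightarrow> real" and g
  proof (cases "p j = q1")
    case True thus ?thesis using q1 q2 q12 unfolding P_def by simp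
  next
    case F1: False
    show ?thesis
    proof (cases "p j = q2")
      case True thus ?thesis using q1 q2 q12 F1 unfolding P_def by simp
    next
      case F2: False
      have "\<not> P j \<or> c j = 0"
      proof (rule ccontr)
        assume "\<not> (\<not> P j \<or> c j = 0)"
        hence Pj: "P j" and cj: "c j \<noteq> 0" by auto
        show False
        proof (cases "p j \<le> x (k+1)")
          case True
          hence "Sk k j" using Pj unfolding P_def Sk_def by simp
          thus False using Q1 j cj F1 by blast
        next
          case False
          hence "Sk (k+1) j" using Pj unfolding P_def Sk_def by simp
          thus False using Q2 j cj F2 by blast
        qed
      qed
      thus ?thesis using F1 F2 h0 by auto
    qed
  qed
  have sumg: "(\<Sum>j<m. if P j then h (c j) * g (p j) else 0) = (\<Sum>j<m. if p j = q1 then h (c j) else 0) * g q1 + (\<Sum>j<m. if p j = q2 then h (c j) else 0) * g q2"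
    if h0: "h 0 = 0" for h :: "real \<Rightarrow> real" and g
  proof -
    have "(\<Sum>j<m. if P j then h (c j) * g (p j) else 0) = (\<Sum>j<m. (if p j = q1 then h (c j) else 0) * g q1 + (if p j = q2 then h (c j) else 0) * g q2)"
      by (rule sum.cong) (use pw h0 in auto)
    thus ?thesis by (simp add: sum.distrib sum_distrib_right)
  qed
  obtain e1 r1 e2 r2 where T: "x k \<le> r1" "r1 \<le> x (k+1+1)" "x k \<le> r2" "r2 \<le> x (k+1+1)"
    "e1 + e2 = C1 + C2" "e1*r1 + e2*r2 = C1*q1 + C2*q2"
    "e1 * relu (x (k+1) - r1) + e2 * relu (x (k+1) - r2) = C1 * (x (k+1) - q1)"
    "\<bar>e1\<bar> * W r1 + \<bar>e2\<bar> * W r2 < \<bar>C1\<bar> * W q1 + \<bar>C2\<bar> * W q2"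
    using two_kink[OF xk0 q1(1) q1(2) q2(1) q2(2) CC] by blast
  have sc: "(\<Sum>j<m. if P j then c j * g (p j) else 0) = C1 * g q1 + C2 * g q2" for g
    using sumg[of "\<lambda>z. z" g] unfolding C1 C2 by (simp add: mult.commute)
  have R: "(\<Sum>j<m. if P j then \<bar>c j\<bar> * W (p j) else 0) \<le> \<bar>e1\<bar> * W r1 + \<bar>e2\<bar> * W r2"
  proof (rule key[where dA = 0 and dB = 0], intro ballI)
    fix i assume i: "i \<in> {1..n}"
    have L: "(\<Sum>j<m. if P j then c j * relu (x i - p j) else 0) = C1 * relu (x i - q1) + C2 * relu (x i - q2)"
      using sc[of "\<lambda>z. relu (x i - z)"] by simp
    show "(\<Sum>j<m. if P j then c j * relu (x i - p j) else 0) = 0 + 0 * x i + e1 * relu (x i - r1) + e2 * relu (x i - r2)"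
    proof (cases "i \<le> k")
      case True
      hence xi: "x i \<le> x k" using x_le i k by auto
      thus ?thesis unfolding L using q1 q2 T by (simp add: relu_def)
    next
      case False
      show ?thesis
      proof (cases "i = k+1")
        case True
        thus ?thesis unfolding L using q1 q2 T(7) by (simp add: relu_def)
      next
        case False2: False
        hence "k+1+1 \<le> i" using False by simp
        hence xi: "x (k+1+1) \<le> x i" using x_le i k by auto
        have "C1 * relu (x i - q1) + C2 * relu (x i - q2) = (C1 + C2) * x i - (C1*q1 + C2*q2)"
          using xi q1 q2 by (simp add: relu_def algebra_simps)
        also have "\<dots> = (e1 + e2) * x i - (e1*r1 + e2*r2)" using T(5,6) by simp
        also have "\<dots> = 0 + 0 * x i + e1 * relu (x i - r1) + e2 * relu (x i - r2)"
          using xi T(2,4) by (simp add: relu_def algebra_simps)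
        finally show ?thesis unfolding L .
      qed
    qed
  qed
  have sa: "(\<Sum>j<m. if P j then \<bar>c j\<bar> * W (p j) else 0) = (\<Sum>j<m. if p j = q1 then \<bar>c j\<bar> else 0) * W q1 + (\<Sum>j<m. if p j = q2 then \<bar>c j\<bar> else 0) * W q2"
    using sumg[of abs W] by simp
  have a1: "\<bar>C1\<bar> \<le> (\<Sum>j<m. if p j = q1 then \<bar>c j\<bar> else 0)"
  proof -
    have "\<bar>C1\<bar> \<le> (\<Sum>j<m. \<bar>if p j = q1 then c j else 0\<bar>)" unfolding C1 by (rule sum_abs)
    also have "\<dots> = (\<Sum>j<m. if p j = q1 then \<bar>c j\<bar> else 0)" by (rule sum.cong) auto
    finally show ?thesis .
  qed
  have a2: "\<bar>C2\<bar> \<le> (\<Sum>j<m. if p j = q2 then \<bar>c j\<bar> else 0)"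
  proof -
    have "\<bar>C2\<bar> \<le> (\<Sum>j<m. \<bar>if p j = q2 then c j else 0\<bar>)" unfolding C2 by (rule sum_abs)
    also have "\<dots> = (\<Sum>j<m. if p j = q2 then \<bar>c j\<bar> else 0)" by (rule sum.cong) auto
    finally show ?thesis .
  qed
  have "\<bar>C1\<bar> * W q1 + \<bar>C2\<bar> * W q2 \<le> (\<Sum>j<m. if P j then \<bar>c j\<bar> * W (p j) else 0)"
    unfolding sa using a1 a2 W_pos[of q1] W_pos[of q2]
    by (intro add_mono mult_right_mono) auto
  thus False using R T(8) by linarith
qed

lemma H1:
  assumes k: "1 \<le> k" "k + 2 \<le> n"
  shows "betw (slope x y k) (slope x y (k+1)) (sL (x (k+1)))"
    "betw (slope x y k) (slope x y (k+1)) (sR (x (k+1)))"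
proof -
  have k0: "1 \<le> k" "k < n" using k by auto
  have k1: "1 \<le> k+1" "k+1 < n" using k by auto
  let ?d0 = "slope x y k" and ?d1 = "slope x y (k+1)"
  have "betw ?d0 ?d1 (sL (x (k+1))) \<and> betw ?d0 ?d1 (sR (x (k+1)))"
  proof (cases "\<forall>j<m. x k < p j \<and> p j < x (k+1) \<longrightarrow> c j = 0")
    case Fk: True
    have sL: "sL (x (k+1)) = ?d0" using flat_facts(2)[OF k0 Fk] .
    show ?thesis
    proof (cases "\<forall>j<m. x (k+1) < p j \<and> p j < x (k+1+1) \<longrightarrow> c j = 0")
      case True
      have "sR (x (k+1)) = ?d1" using flat_facts(1)[OF k1 True] .
      thus ?thesis using sL unfolding betw_def by auto
    next
      case False
      then obtain q C where M: "x (k+1) < q" "q < x (k+1+1)" "\<forall>j<m. Sk (k+1) j \<and> c j \<noteq> 0 \<longrightarrow> p j = q"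
        "C = (\<Sum>j<m. if p j = q then c j else 0)" using dich[OF k1] by blast
      have "sL (x (k+1)) = sR (x (k+1))" using mono_facts(1)[OF k1 M] .
      thus ?thesis using sL unfolding betw_def by auto
    qed
  next
    case False
    then obtain q1 C1 where M1: "x k < q1" "q1 < x (k+1)" "\<forall>j<m. Sk k j \<and> c j \<noteq> 0 \<longrightarrow> p j = q1"
        "C1 = (\<Sum>j<m. if p j = q1 then c j else 0)" and C1nz: "C1 \<noteq> 0" using dich[OF k0] by blast
    have e1: "sR (x (k+1)) = sL (x (k+1))" using mono_facts(2)[OF k0 M1] .
    have e2: "sL (x (k+1)) = sR (x k) + C1" using mono_facts(3)[OF k0 M1] .
    have e3: "?d0 = sR (x k) + C1 * ((x (k+1) - q1) / (x (k+1) - x k))" using mono_facts(4)[OF k0 M1] .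
    show ?thesis
    proof (cases "\<forall>j<m. x (k+1) < p j \<and> p j < x (k+1+1) \<longrightarrow> c j = 0")
      case True
      have "sR (x (k+1)) = ?d1" using flat_facts(1)[OF k1 True] .
      thus ?thesis using e1 unfolding betw_def by auto
    next
      case False
      then obtain q2 C2 where M2: "x (k+1) < q2" "q2 < x (k+1+1)" "\<forall>j<m. Sk (k+1) j \<and> c j \<noteq> 0 \<longrightarrow> p j = q2"
        "C2 = (\<Sum>j<m. if p j = q2 then c j else 0)" and C2nz: "C2 \<noteq> 0" using dich[OF k1] by blast
      have e4: "?d1 = sR (x (k+1)) + C2 * ((x (k+1+1) - q2) / (x (k+1+1) - x (k+1)))" using mono_facts(4)[OF k1 M2] .
      define th1 where "th1 = (x (k+1) - q1) / (x (k+1) - x k)"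
      define th2 where "th2 = (x (k+1+1) - q2) / (x (k+1+1) - x (k+1))"
      have th1: "0 < th1" "th1 < 1" unfolding th1_def using M1(1,2) by (auto simp: divide_less_eq)
      have th2: "0 < th2" "th2 < 1" unfolding th2_def using M2(1,2) by (auto simp: divide_less_eq)
      have CC: "\<not> C1 * C2 < 0"
      proof
        assume "C1 * C2 < 0"
        thus False using bump[OF k M1(1,2,3,4) M2(1,2,3,4)] by blast
      qed
      hence same: "(0 < C1 \<and> 0 < C2) \<or> (C1 < 0 \<and> C2 < 0)" using C1nz C2nz
        by (auto simp: mult_less_0_iff)
      let ?s = "sL (x (k+1))"
      have d0s: "?s - ?d0 = C1 * (1 - th1)" using e2 e3 unfolding th1_def by (simp add: algebra_simps)
      have d1s: "?d1 - ?s = C2 * th2" using e4 e1 unfolding th2_def by simp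
      have "betw ?d0 ?d1 ?s"
      proof (cases "0 < C1")
        case True
        hence "0 < C1 * (1 - th1)" "0 < C2 * th2" using same th1 th2 by auto
        thus ?thesis using d0s d1s unfolding betw_def by auto
      next
        case False
        hence "C1 * (1 - th1) < 0" "C2 * th2 < 0" using same th1 th2 by (auto simp: mult_neg_pos)
        thus ?thesis using d0s d1s unfolding betw_def by auto
      qed
      thus ?thesis using e1 by simp
    qed
  qed
  thus "betw ?d0 ?d1 (sL (x (k+1)))" "betw ?d0 ?d1 (sR (x (k+1)))" by auto
qed

end

context mnk begin

lemma left_part:
  assumes t: "t \<le> x 2"
  shows "kv t = gline x y 1 t"
proof -
  have n1: "1 < n" using n2 by simp
  have x12: "x 1 < x 2" using xinc n1 by (metis le_refl one_add_one)
  define P where "P j \<longleftrightarrow> p j < x 2" for j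
  define L where "L = x 2 - x 1"
  have Lp: "0 < L" unfolding L_def using x12 by simp
  define S0 where "S0 = (\<Sum>j<m. if P j then c j else 0)"
  define S1 where "S1 = (\<Sum>j<m. if P j then c j * p j else 0)"
  define Cm where "Cm = (\<Sum>j<m. if P j then c j * relu (p j - x 1) else 0) / L"
  have CmL: "(\<Sum>j<m. if P j then c j * relu (p j - x 1) else 0) = Cm * L" unfolding Cm_def using Lp by simp
  have R: "(\<Sum>j<m. if P j then \<bar>c j\<bar> * W (p j) else 0) \<le> \<bar>Cm\<bar> * W (x 2) + \<bar>0\<bar> * W (x 2)"
  proof (rule key[where dA = "Cm * x 2 - S1" and dB = "S0 - Cm"], intro ballI)
    fix i assume i: "i \<in> {1..n}"
    show "(\<Sum>j<m. if P j then c j * relu (x i - p j) else 0) = Cm * x 2 - S1 + (S0 - Cm) * x i + Cm * relu (x i - x 2) + 0 * relu (x i - x 2)"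
    proof (cases "i = 1")
      case True
      have "(\<Sum>j<m. if P j then c j * relu (x 1 - p j) else 0) = (\<Sum>j<m. (if P j then c j * relu (p j - x 1) else 0) - (x 1 * (if P j then c j else 0) - (if P j then c j * p j else 0)) * (-1))"
      proof (rule sum.cong)
        fix j assume "j \<in> {..<m}"
        have e: "relu (x 1 - p j) = relu (p j - x 1) - (p j - x 1)" using relu_neg[of "p j - x 1"] by simp
        show "(if P j then c j * relu (x 1 - p j) else 0) = (if P j then c j * relu (p j - x 1) else 0) - (x 1 * (if P j then c j else 0) - (if P j then c j * p j else 0)) * (-1)"
          unfolding e by (simp add: algebra_simps)
      qed simp
      also have "\<dots> = Cm * L + x 1 * S0 - S1" unfolding S0_def S1_def
        by (simp add: sum_subtractf sum.distrib sum_distrib_left CmL[symmetric] algebra_simps)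
      finally show ?thesis unfolding True using x12 unfolding L_def by (simp add: relu_def algebra_simps)
    next
      case False
      hence "2 \<le> i" using i by simp
      hence xi: "x 2 \<le> x i" using x_le i by auto
      have "(\<Sum>j<m. if P j then c j * relu (x i - p j) else 0) = (\<Sum>j<m. if P j then c j * (x i - p j) else 0)"
        by (rule sum.cong) (use xi in \<open>auto simp: P_def relu_def\<close>)
      also have "\<dots> = x i * S0 - S1" unfolding S0_def S1_def by (rule lin_sum)
      finally show ?thesis using xi by (simp add: relu_def algebra_simps)
    qed
  qed
  define sg :: real where "sg = (if 0 \<le> Cm then 1 else -1)"
  define al where "al = sg * W (x 2) / L"
  define phi where "phi z = al * relu (z - x 1)" for z
  have sphi: "(\<Sum>j<m. if P j then c j * phi (p j) else 0) = \<bar>Cm\<bar> * W (x 2)"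
  proof -
    have "(\<Sum>j<m. if P j then c j * phi (p j) else 0) = (\<Sum>j<m. al * (if P j then c j * relu (p j - x 1) else 0))"
      by (rule sum.cong) (auto simp: phi_def)
    also have "\<dots> = al * (Cm * L)" by (simp add: sum_distrib_left[symmetric] CmL)
    also have "\<dots> = \<bar>Cm\<bar> * W (x 2)" unfolding al_def sg_def using Lp by (auto simp: abs_if)
    finally show ?thesis .
  qed
  have aphi: "\<bar>phi z\<bar> = W (x 2) * relu (z - x 1) / L" for z
    unfolding phi_def al_def sg_def using Lp W_pos[of "x 2"] by (simp add: abs_mult relu_ge0)
  have st: "\<bar>phi z\<bar> < W z" if "z < x 2" for z
  proof (cases "z \<le> x 1")
    case True thus ?thesis unfolding aphi using W_pos[of z] by (simp add: relu_def)
  next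
    case False
    hence "W (x 2) * (z - x 1) < (x 2 - x 1) * W z" using W_chord[of "x 1" z "x 2"] x1nn that by simp
    thus ?thesis unfolding aphi using False Lp unfolding L_def by (simp add: relu_def pos_divide_less_eq mult.commute)
  qed
  have le: "\<forall>j<m. P j \<longrightarrow> c j * phi (p j) \<le> \<bar>c j\<bar> * W (p j)"
  proof (intro allI impI)
    fix j assume "j < m" "P j"
    hence "\<bar>phi (p j)\<bar> \<le> W (p j)" using st unfolding P_def by (simp add: less_imp_le)
    hence "\<bar>c j\<bar> * \<bar>phi (p j)\<bar> \<le> \<bar>c j\<bar> * W (p j)" by (simp add: mult_left_mono)
    moreover have "c j * phi (p j) \<le> \<bar>c j\<bar> * \<bar>phi (p j)\<bar>" using abs_ge_self[of "c j * phi (p j)"] by (simp add: abs_mult)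
    ultimately show "c j * phi (p j) \<le> \<bar>c j\<bar> * W (p j)" by linarith
  qed
  have eq: "\<forall>j<m. P j \<longrightarrow> c j * phi (p j) = \<bar>c j\<bar> * W (p j)"
    by (rule cert_sum[OF le]) (use R sphi in simp)
  have Z: "c j = 0" if "j < m" "p j < x 2" for j
  proof (rule ccontr)
    assume "c j \<noteq> 0"
    hence "\<bar>c j\<bar> * \<bar>phi (p j)\<bar> < \<bar>c j\<bar> * W (p j)" using st that by simp
    moreover have "c j * phi (p j) \<le> \<bar>c j\<bar> * \<bar>phi (p j)\<bar>" using abs_ge_self[of "c j * phi (p j)"] by (simp add: abs_mult)
    moreover have "c j * phi (p j) = \<bar>c j\<bar> * W (p j)" using eq that unfolding P_def by blast
    ultimately show False by linarith
  qed
  have lin: "kv s = A + B * s" if "s \<le> x 2" for s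
  proof -
    have "(\<Sum>j<m. c j * relu (s - p j)) = 0"
    proof (rule sum.neutral, intro ballI)
      fix j assume "j \<in> {..<m}"
      thus "c j * relu (s - p j) = 0" using Z that by (cases "p j < x 2") (auto simp: relu_def)
    qed
    thus ?thesis unfolding kv_def by simp
  qed
  have y1: "y 1 = A + B * x 1" using lin[of "x 1"] x12 kv_interp[of 1] n1 by simp
  have y2: "y 2 = A + B * x 2" using lin[of "x 2"] kv_interp[of 2] n2 by simp
  have "slope x y 1 = (y 2 - y 1) / (x 2 - x 1)" unfolding slope_def by (simp only: one_add_one)
  also have "\<dots> = B" using y1 y2 x12 by (simp add: field_simps)
  finally have "slope x y 1 = B" .
  thus ?thesis unfolding gline_def using lin[OF t] y1 by (simp add: algebra_simps)
qed

end

context mnk begin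

lemma right_part:
  assumes t: "x (n-1) \<le> t"
  shows "kv t = gline x y (n-1) t"
proof -
  define N where "N = n - 1"
  have nN: "n = N + 1" unfolding N_def using n2 by simp
  have N1: "1 \<le> N" "N < n" using n2 nN by auto
  have xN: "x N < x n" using xinc N1 nN by auto
  have xN0: "0 \<le> x N" using x_nn N1 by simp
  define P where "P j \<longleftrightarrow> x N < p j" for j
  define L where "L = x n - x N"
  have Lp: "0 < L" unfolding L_def using xN by simp
  define Cm where "Cm = (\<Sum>j<m. if P j then c j * relu (x n - p j) else 0) / L"
  have CmL: "(\<Sum>j<m. if P j then c j * relu (x n - p j) else 0) = Cm * L" unfolding Cm_def using Lp by simp
  have R: "(\<Sum>j<m. if P j then \<bar>c j\<bar> * W (p j) else 0) \<le> \<bar>Cm\<bar> * W (x N) + \<bar>0\<bar> * W (x N)"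
  proof (rule key[where dA = 0 and dB = 0], intro ballI)
    fix i assume i: "i \<in> {1..n}"
    show "(\<Sum>j<m. if P j then c j * relu (x i - p j) else 0) = 0 + 0 * x i + Cm * relu (x i - x N) + 0 * relu (x i - x N)"
    proof (cases "i = n")
      case True
      show ?thesis unfolding True using CmL xN unfolding L_def by (simp add: relu_def)
    next
      case False
      hence "i \<le> N" using i nN by simp
      hence xi: "x i \<le> x N" using x_le i N1 by auto
      have "(\<Sum>j<m. if P j then c j * relu (x i - p j) else 0) = 0"
        by (rule sum.neutral) (use xi in \<open>auto simp: P_def relu_def\<close>)
      thus ?thesis using xi by (simp add: relu_def)
    qed
  qed
  define sg :: real where "sg = (if 0 \<le> Cm then 1 else -1)"
  define al where "al = sg * W (x N) / L"
  define phi where "phi z = al * relu (x n - z)" for z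
  have sphi: "(\<Sum>j<m. if P j then c j * phi (p j) else 0) = \<bar>Cm\<bar> * W (x N)"
  proof -
    have "(\<Sum>j<m. if P j then c j * phi (p j) else 0) = (\<Sum>j<m. al * (if P j then c j * relu (x n - p j) else 0))"
      by (rule sum.cong) (auto simp: phi_def)
    also have "\<dots> = al * (Cm * L)" by (simp add: sum_distrib_left[symmetric] CmL)
    also have "\<dots> = \<bar>Cm\<bar> * W (x N)" unfolding al_def sg_def using Lp by (auto simp: abs_if)
    finally show ?thesis .
  qed
  have aphi: "\<bar>phi z\<bar> = W (x N) * relu (x n - z) / L" for z
    unfolding phi_def al_def sg_def using Lp W_pos[of "x N"] by (simp add: abs_mult relu_ge0)
  have st: "\<bar>phi z\<bar> < W z" if "x N < z" for z
  proof (cases "x n \<le> z")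
    case True thus ?thesis unfolding aphi using W_pos[of z] by (simp add: relu_def)
  next
    case False
    have "W (x N) \<le> W z" using W_mono[OF xN0] that by simp
    hence "W (x N) * (x n - z) \<le> W z * (x n - z)" using False by (simp add: mult_right_mono)
    also have "\<dots> < W z * L" using W_pos[of z] that unfolding L_def by simp
    finally have "W (x N) * (x n - z) < W z * L" .
    thus ?thesis unfolding aphi using False Lp by (simp add: relu_def pos_divide_less_eq)
  qed
  have le: "\<forall>j<m. P j \<longrightarrow> c j * phi (p j) \<le> \<bar>c j\<bar> * W (p j)"
  proof (intro allI impI)
    fix j assume "j < m" "P j"
    hence "\<bar>phi (p j)\<bar> \<le> W (p j)" using st unfolding P_def by (simp add: less_imp_le)
    hence "\<bar>c j\<bar> * \<bar>phi (p j)\<bar> \<le> \<bar>c j\<bar> * W (p j)" by (simp add: mult_left_mono)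
    moreover have "c j * phi (p j) \<le> \<bar>c j\<bar> * \<bar>phi (p j)\<bar>" using abs_ge_self[of "c j * phi (p j)"] by (simp add: abs_mult)
    ultimately show "c j * phi (p j) \<le> \<bar>c j\<bar> * W (p j)" by linarith
  qed
  have eq: "\<forall>j<m. P j \<longrightarrow> c j * phi (p j) = \<bar>c j\<bar> * W (p j)"
    by (rule cert_sum[OF le]) (use R sphi in simp)
  have Z: "c j = 0" if "j < m" "x N < p j" for j
  proof (rule ccontr)
    assume "c j \<noteq> 0"
    hence "\<bar>c j\<bar> * \<bar>phi (p j)\<bar> < \<bar>c j\<bar> * W (p j)" using st that by simp
    moreover have "c j * phi (p j) \<le> \<bar>c j\<bar> * \<bar>phi (p j)\<bar>" using abs_ge_self[of "c j * phi (p j)"] by (simp add: abs_mult)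
    moreover have "c j * phi (p j) = \<bar>c j\<bar> * W (p j)" using eq that unfolding P_def by blast
    ultimately show False by linarith
  qed
  have lin: "kv s = y N + sR (x N) * (s - x N)" if "x N \<le> s" for s
  proof -
    have "(\<Sum>j<m. if x N < p j then c j * relu (s - p j) else 0) = 0"
      by (rule sum.neutral) (use Z in auto)
    thus ?thesis using kv_shift[OF that] kv_interp[of N] N1 by simp
  qed
  have "y n = y N + sR (x N) * (x n - x N)" using lin[of "x n"] xN kv_interp[of n] n2 by simp
  hence "slope x y N = sR (x N)" unfolding slope_def nN using xN nN by (simp add: field_simps)
  thus ?thesis unfolding gline_def N_def[symmetric] using lin t unfolding N_def by simp
qed

end

context mnk begin

lemma mid_part:
  assumes i: "2 \<le> i" "i + 2 \<le> n" and t: "x i \<le> t" "t \<le> x (i+1)"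
  shows "(slope x y (i-1) < slope x y i \<and> slope x y i < slope x y (i+1) \<longrightarrow>
            max (gline x y (i-1) t) (gline x y (i+1) t) \<le> kv t \<and> kv t \<le> gline x y i t)
       \<and> (slope x y i < slope x y (i-1) \<and> slope x y (i+1) < slope x y i \<longrightarrow>
            min (gline x y (i-1) t) (gline x y (i+1) t) \<ge> kv t \<and> kv t \<ge> gline x y i t)
       \<and> (\<not> (slope x y (i-1) < slope x y i \<and> slope x y i < slope x y (i+1)) \<and>
          \<not> (slope x y i < slope x y (i-1) \<and> slope x y (i+1) < slope x y i) \<longrightarrow> kv t = gline x y i t)"
proof -
  obtain k where ik: "i = k + 1" using i by (metis add.commute add_diff_cancel_left' le_add_diff_inverse2 le_trans one_le_numeral)
  have k: "1 \<le> k" "k + 2 \<le> n" using i ik by auto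
  have i1: "1 \<le> i" "i < n" using i by auto
  define d0 where "d0 = slope x y k"
  define d1 where "d1 = slope x y i"
  define d2 where "d2 = slope x y (i+1)"
  have km: "i - 1 = k" using ik by simp
  have xk: "x k < x i" using xinc k ik by auto
  have xi: "x i < x (i+1)" using xinc i1 by auto
  have yi: "y i = y k + d0 * (x i - x k)" unfolding d0_def slope_def ik using xk ik by (simp add: field_simps)
  have yi1: "y (i+1) = y i + d1 * (x (i+1) - x i)" unfolding d1_def slope_def using xi by (simp add: field_simps)
  have g0: "gline x y k t = y i + d0 * (t - x i)" unfolding gline_def d0_def[symmetric] using yi by (simp add: algebra_simps)
  have g1: "gline x y i t = y i + d1 * (t - x i)" unfolding gline_def d1_def by simp
  have g1': "gline x y i t = y (i+1) + d1 * (t - x (i+1))" unfolding g1 using yi1 by (simp add: algebra_simps)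
  have g2: "gline x y (i+1) t = y (i+1) + d2 * (t - x (i+1))" unfolding gline_def d2_def by simp
  have tp: "0 \<le> t - x i" and tn: "t - x (i+1) \<le> 0" using t by auto
  have H0: "betw d0 d1 (sR (x i))" using H1(2)[OF k] unfolding d0_def d1_def ik by simp
  have H2: "betw d1 d2 (sL (x (i+1)))" using H1(1)[OF i1(1) i(2)] unfolding d1_def d2_def by simp
  have "(d0 < d1 \<and> d1 < d2 \<longrightarrow> max (y i + d0 * (t - x i)) (y (i+1) + d2 * (t - x (i+1))) \<le> kv t \<and> kv t \<le> y i + d1 * (t - x i))
       \<and> (d1 < d0 \<and> d2 < d1 \<longrightarrow> min (y i + d0 * (t - x i)) (y (i+1) + d2 * (t - x (i+1))) \<ge> kv t \<and> kv t \<ge> y i + d1 * (t - x i))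
       \<and> (\<not> (d0 < d1 \<and> d1 < d2) \<and> \<not> (d1 < d0 \<and> d2 < d1) \<longrightarrow> kv t = y i + d1 * (t - x i))"
  proof (cases "\<forall>j<m. x i < p j \<and> p j < x (i+1) \<longrightarrow> c j = 0")
    case True
    have kvt: "kv t = y i + d1 * (t - x i)" using flat_facts(3)[OF i1 True t] unfolding d1_def .
    have kvt': "kv t = y (i+1) + d1 * (t - x (i+1))" using kvt yi1 by (simp add: algebra_simps)
    have c1: "d0 < d1 \<Longrightarrow> d0 * (t - x i) \<le> d1 * (t - x i)" using tp by (simp add: mult_right_mono)
    have c2: "d1 < d2 \<Longrightarrow> d2 * (t - x (i+1)) \<le> d1 * (t - x (i+1))" using tn by (simp add: mult_right_mono_neg)
    have c3: "d1 < d0 \<Longrightarrow> d1 * (t - x i) \<le> d0 * (t - x i)" using tp by (simp add: mult_right_mono)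
    have c4: "d2 < d1 \<Longrightarrow> d1 * (t - x (i+1)) \<le> d2 * (t - x (i+1))" using tn by (simp add: mult_right_mono_neg)
    show ?thesis using c1 c2 c3 c4 kvt kvt' by auto
  next
    case False
    then obtain q C where M: "x i < q" "q < x (i+1)" "\<forall>j<m. Sk i j \<and> c j \<noteq> 0 \<longrightarrow> p j = q"
        "C = (\<Sum>j<m. if p j = q then c j else 0)" and Cnz: "C \<noteq> 0" using dich[OF i1] by blast
    define a where "a = sR (x i)"
    define th where "th = (x (i+1) - q) / (x (i+1) - x i)"
    have th: "0 < th" "th < 1" unfolding th_def using M(1,2) by (auto simp: divide_less_eq)
    have b: "sL (x (i+1)) = a + C" using mono_facts(3)[OF i1 M] unfolding a_def .
    have d1a: "d1 = a + C * th" using mono_facts(4)[OF i1 M] unfolding a_def th_def d1_def .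
    have kvf: "kv s = y i + a * (s - x i) + C * relu (s - q)" if "x i \<le> s" "s \<le> x (i+1)" for s
      using mono_facts(5)[OF i1 M that] unfolding a_def .
    have kvt: "kv t = y i + a * (t - x i) + C * relu (t - q)" using kvf t .
    have yi1': "y (i+1) = y i + a * (x (i+1) - x i) + C * (x (i+1) - q)"
      using kvf[of "x (i+1)"] xi M kv_interp[of "i+1"] i by (simp add: relu_def)
    have kvt2: "kv t = y (i+1) + (a + C) * (t - x (i+1)) + C * relu (q - t)"
    proof -
      have e: "relu (t - q) = (t - q) + relu (q - t)" using relu_neg[of "t - q"] by simp
      show ?thesis unfolding kvt yi1' e by (simp add: algebra_simps)
    qed
    have rq0: "0 \<le> relu (q - t)" "0 \<le> relu (t - q)" by (simp_all add: relu_ge0)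
    have rb: "relu (t - q) \<le> (t - x i) * th"
    proof -
      have "relu (t - q) * (x (i+1) - x i) \<le> (t - x i) * (x (i+1) - q)"
      proof (cases "t \<le> q")
        case True thus ?thesis using tp M by (simp add: relu_def)
      next
        case False
        have "(t - x i) * (x (i+1) - q) - (t - q) * (x (i+1) - x i) = (q - x i) * (x (i+1) - t)"
          by (simp add: algebra_simps)
        moreover have "0 \<le> (q - x i) * (x (i+1) - t)" using M t by simp
        ultimately show ?thesis using False by (simp add: relu_def)
      qed
      thus ?thesis unfolding th_def using xi by (simp add: pos_le_divide_eq mult.commute)
    qed
    have Ha: "betw d0 d1 a" using H0 unfolding a_def .
    have Hb: "betw d1 d2 (a + C)" using H2 unfolding b .
    have pos_cvx: "0 < C \<Longrightarrow> d0 < d1 \<and> d1 < d2"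
    proof -
      assume Cp: "0 < C"
      have "a < d1" using d1a Cp th by simp
      moreover have "d1 < a + C"
      proof -
        have "C * th < C * 1" using Cp th by (intro mult_strict_left_mono) auto
        thus ?thesis using d1a by simp
      qed
      ultimately show ?thesis using Ha Hb unfolding betw_def by auto
    qed
    have neg_ccv: "C < 0 \<Longrightarrow> d1 < d0 \<and> d2 < d1"
    proof -
      assume Cn: "C < 0"
      have "d1 < a" using d1a Cn th by (simp add: mult_neg_pos)
      moreover have "a + C < d1"
      proof -
        have "C * 1 < C * th" using Cn th by (intro mult_strict_left_mono_neg) auto
        thus ?thesis using d1a by simp
      qed
      ultimately show ?thesis using Ha Hb unfolding betw_def by auto
    qed
    have cvx: "max (y i + d0 * (t - x i)) (y (i+1) + d2 * (t - x (i+1))) \<le> kv t \<and> kv t \<le> y i + d1 * (t - x i)"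
      if D: "d0 < d1" "d1 < d2"
    proof -
      have a1: "d0 \<le> a" "a \<le> d1" using Ha D unfolding betw_def by auto
      have b1: "a + C \<le> d2" using Hb D unfolding betw_def by auto
      have C0: "0 \<le> C"
      proof (rule ccontr)
        assume "\<not> 0 \<le> C" thus False using neg_ccv D by auto
      qed
      have "d0 * (t - x i) \<le> a * (t - x i)" using a1 tp by (simp add: mult_right_mono)
      moreover have "0 \<le> C * relu (t - q)" using C0 rq0 by simp
      moreover have "d2 * (t - x (i+1)) \<le> (a + C) * (t - x (i+1))" using b1 tn by (simp add: mult_right_mono_neg)
      moreover have "0 \<le> C * relu (q - t)" using C0 rq0 by simp
      moreover have "C * relu (t - q) \<le> C * ((t - x i) * th)" using C0 rb by (simp add: mult_left_mono)
      ultimately show ?thesis using kvt kvt2 d1a by (simp add: algebra_simps)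
    qed
    have ccv: "min (y i + d0 * (t - x i)) (y (i+1) + d2 * (t - x (i+1))) \<ge> kv t \<and> kv t \<ge> y i + d1 * (t - x i)"
      if D: "d1 < d0" "d2 < d1"
    proof -
      have a1: "a \<le> d0" "d1 \<le> a" using Ha D unfolding betw_def by auto
      have b1: "d2 \<le> a + C" using Hb D unfolding betw_def by auto
      have C0: "C \<le> 0"
      proof (rule ccontr)
        assume "\<not> C \<le> 0" thus False using pos_cvx D by auto
      qed
      have "a * (t - x i) \<le> d0 * (t - x i)" using a1 tp by (simp add: mult_right_mono)
      moreover have "C * relu (t - q) \<le> 0" using C0 rq0 by (simp add: mult_nonpos_nonneg)
      moreover have "(a + C) * (t - x (i+1)) \<le> d2 * (t - x (i+1))" using b1 tn by (simp add: mult_right_mono_neg)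
      moreover have "C * relu (q - t) \<le> 0" using C0 rq0 by (simp add: mult_nonpos_nonneg)
      moreover have "C * ((t - x i) * th) \<le> C * relu (t - q)" using C0 rb by (simp add: mult_left_mono_neg)
      ultimately show ?thesis using kvt kvt2 d1a by (simp add: algebra_simps)
    qed
    have oth: "\<not> (\<not> (d0 < d1 \<and> d1 < d2) \<and> \<not> (d1 < d0 \<and> d2 < d1))"
      using pos_cvx neg_ccv Cnz by (cases "0 < C") auto
    show ?thesis using cvx ccv oth by blast
  qed
  thus ?thesis unfolding km g0 g1 g2 d0_def d1_def d2_def by simp
qed

end

lemma mni_interp: "min_norm_interpolant n x y f \<Longrightarrow> \<forall>r\<in>{1..n}. f (x r) = y r"
  unfolding min_norm_interpolant_def interpolates_def by blast

lemma curv_mid: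
  assumes "2 \<le> i" "i + 2 \<le> n"
  shows "curv n x y i = (if slope x y (i-1) < slope x y i then 1 else if slope x y i = slope x y (i-1) then 0 else -1)"
    "curv n x y (i+1) = (if slope x y i < slope x y (i+1) then 1 else if slope x y (i+1) = slope x y i then 0 else -1)"
  using assms unfolding curv_def delta_def by auto

theorem lemma2:
  fixes n :: nat and x y :: "nat \<Rightarrow> real" and f :: "real \<Rightarrow> real"
  assumes "n \<ge> 2"
    and "0 \<le> x 1"
    and "\<forall>i. 1 \<le> i \<and> i < n \<longrightarrow> x i < x (i+1)"
    and "min_norm_interpolant n x y f"
  shows "(\<forall>t. t < x 2 \<longrightarrow> f t = gline x y 1 t)
    \<and> (\<forall>t. x (n-1) \<le> t \<longrightarrow> f t = gline x y (n-1) t)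
    \<and> (\<forall>i\<in>{2..n-2}. \<forall>t. x i \<le> t \<and> t < x (i+1) \<longrightarrow>
          ((curv n x y i = 1 \<and> curv n x y (i+1) = 1 \<longrightarrow>
              max (gline x y (i-1) t) (gline x y (i+1) t) \<le> f t \<and> f t \<le> gline x y i t)
         \<and> (curv n x y i = -1 \<and> curv n x y (i+1) = -1 \<longrightarrow>
              min (gline x y (i-1) t) (gline x y (i+1) t) \<ge> f t \<and> f t \<ge> gline x y i t)
         \<and> (curv n x y i = 0 \<or> curv n x y (i+1) = 0 \<or> curv n x y i \<noteq> curv n x y (i+1) \<longrightarrow>
              f t = gline x y i t)))"
proof -
  obtain A B :: real and c p :: "nat \<Rightarrow> real" and m :: nat
    where F: "\<And>t. f t = A + B * t + (\<Sum>j<m. c j * relu (t - p j))"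
    and K: "\<And>P e1 r1 e2 r2 dA dB. (\<forall>r\<in>{1..n}. (\<Sum>j<m. if P j then c j * relu (x r - p j) else 0)
            = dA + dB * x r + e1 * relu (x r - r1) + e2 * relu (x r - r2))
         \<Longrightarrow> (\<Sum>j<m. if P j then \<bar>c j\<bar> * W (p j) else 0) \<le> \<bar>e1\<bar> * W r1 + \<bar>e2\<bar> * W r2"
    by (rule key_extract[OF assms(4)]) blast
  have I: "\<forall>r\<in>{1..n}. f (x r) = y r" using mni_interp[OF assms(4)] .
  interpret M: mnk n x y A B m c p
  proof
    show "n \<ge> 2" using assms(1) .
    show "0 \<le> x 1" using assms(2) .
    show "\<forall>i. 1 \<le> i \<and> i < n \<longrightarrow> x i < x (i+1)" using assms(3) .
    show "\<forall>r\<in>{1..n}. A + B * x r + (\<Sum>j<m. c j * relu (x r - p j)) = y r" using I F by simp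
  next
    fix P e1 r1 e2 r2 dA dB
    assume "\<forall>r\<in>{1..n}. (\<Sum>j<m. if P j then c j * relu (x r - p j) else 0)
            = dA + dB * x r + e1 * relu (x r - r1) + e2 * relu (x r - r2)"
    thus "(\<Sum>j<m. if P j then \<bar>c j\<bar> * W (p j) else 0) \<le> \<bar>e1\<bar> * W r1 + \<bar>e2\<bar> * W r2" by (rule K)
  qed
  have fkv: "f t = M.kv t" for t using F unfolding M.kv_def by simp
  have P1: "\<forall>t. t < x 2 \<longrightarrow> f t = gline x y 1 t" using M.left_part fkv by simp
  have P2: "\<forall>t. x (n-1) \<le> t \<longrightarrow> f t = gline x y (n-1) t" using M.right_part fkv by simp
  have P3: "\<forall>i\<in>{2..n-2}. \<forall>t. x i \<le> t \<and> t < x (i+1) \<longrightarrow>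
          ((curv n x y i = 1 \<and> curv n x y (i+1) = 1 \<longrightarrow>
              max (gline x y (i-1) t) (gline x y (i+1) t) \<le> f t \<and> f t \<le> gline x y i t)
         \<and> (curv n x y i = -1 \<and> curv n x y (i+1) = -1 \<longrightarrow>
              min (gline x y (i-1) t) (gline x y (i+1) t) \<ge> f t \<and> f t \<ge> gline x y i t)
         \<and> (curv n x y i = 0 \<or> curv n x y (i+1) = 0 \<or> curv n x y i \<noteq> curv n x y (i+1) \<longrightarrow>
              f t = gline x y i t))"
  proof (intro ballI allI impI)
    fix i t assume i: "i \<in> {2..n-2}" and t: "x i \<le> t \<and> t < x (i+1)"
    have i2: "2 \<le> i" "i + 2 \<le> n" using i by auto
    have MP: "(slope x y (i-1) < slope x y i \<and> slope x y i < slope x y (i+1) \<longrightarrow>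
            max (gline x y (i-1) t) (gline x y (i+1) t) \<le> f t \<and> f t \<le> gline x y i t)
       \<and> (slope x y i < slope x y (i-1) \<and> slope x y (i+1) < slope x y i \<longrightarrow>
            min (gline x y (i-1) t) (gline x y (i+1) t) \<ge> f t \<and> f t \<ge> gline x y i t)
       \<and> (\<not> (slope x y (i-1) < slope x y i \<and> slope x y i < slope x y (i+1)) \<and>
          \<not> (slope x y i < slope x y (i-1) \<and> slope x y (i+1) < slope x y i) \<longrightarrow> f t = gline x y i t)"
      using M.mid_part[OF i2, of t] t unfolding fkv by simp
    show "(curv n x y i = 1 \<and> curv n x y (i+1) = 1 \<longrightarrow>
              max (gline x y (i-1) t) (gline x y (i+1) t) \<le> f t \<and> f t \<le> gline x y i t)
         \<and> (curv n x y i = -1 \<and> curv n x y (i+1) = -1 \<longrightarrow>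
              min (gline x y (i-1) t) (gline x y (i+1) t) \<ge> f t \<and> f t \<ge> gline x y i t)
         \<and> (curv n x y i = 0 \<or> curv n x y (i+1) = 0 \<or> curv n x y i \<noteq> curv n x y (i+1) \<longrightarrow>
              f t = gline x y i t)"
      unfolding curv_mid[OF i2] using MP by (auto split: if_splits)
  qed
  show ?thesis using P1 P2 P3 by blast
qed

end
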